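(* Let $\mathsf{K}$ be a finite simplicial complex with vertex set $P\subset\mathbb{R}^d$ and $p>0$, and let $\mathscr{M}$ and $\prec_\Omega$ be as constructed in the context; write the cycles of $\mathscr{M}$ as $\zeta_1\prec_\Omega\cdots\prec_\Omega\zeta_m$. Let $\zeta'_1,\dots,\zeta'_m$ be any $p$-cycles with $\operatorname{span}\{[\zeta'_1],\dots,[\zeta'_m]\}=H_p(\mathsf{K})$, indexed so that $r_P([\zeta'_i])<r_P([\zeta'_j])$ implies $i<j$. Then $r_P(\zeta_j)\le r_P([\zeta'_j])$ for all $1\le j\le m$.
   Context: All homology is with $\mathbb{Z}_2$ coefficients. For $v\in\mathbb{R}^d$ and a simplex $\sigma$, $r_v(\sigma)=\max_{x\text{ vertex of }\sigma}\|v-x\|_2$; for a nonzero chain $\zeta$, $r_v(\zeta)=\max_{\sigma\in\zeta}r_v(\sigma)$. Define $r_P(\zeta)=\min_{v\in P}r_v(\zeta)$ and $r_P([\zeta])=\min_{v\in P}\min_{\eta\in[\zeta]}r_v(\eta)$. For each $v\in P$, $\prec_v$ is a fixed total order on the simplices of $\mathsf{K}$ with $\sigma_1\prec_v\sigma_2$ whenever $\sigma_1$ is a proper face of $\sigma_2$ or $r_v(\sigma_1)<r_v(\sigma_2)$; for nonzero chains, $\zeta\prec_v\zeta'$ iff the $\prec_v$-largest simplex of $\zeta$ precedes that of $\zeta'$. $\mathcal{D}_v(\mathsf{K})$ is the simplexwise filtration adding simplices in $\prec_v$-order. Let $\zeta_{v,1}\prec_v\cdots\prec_v\zeta_{v,\beta}$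 be the essential $p$-cycles of $\mathcal{D}_v(\mathsf{K})$ computed by standard reduction (reduce the $\mathbb{Z}_2$ boundary matrix left to right by adding an earlier column with the same lowest-one row until all nonzero columns have distinct lowest ones, recording the column operations in $V$ starting from the identity; essential $p$-cycles are columns $V_i$ with $\sigma_i$ a $p$-simplex, reduced column $i$ zero, and $i$ not the lowest-one row of any nonzero reduced column). Let $\Omega=\{\zeta_{v,i}: v\in P,\ 1\le i\le\beta\}$, totally ordered by $\prec_\Omega$ so that $r_v(\zeta_{v,i})<r_{v'}(\zeta_{v',i'})$ implies $\zeta_{v,i}\prec_\Omega\zeta_{v',i'}$, and $\zeta_{v,i}\prec_v\zeta_{v,i'}$ implies $\zeta_{v,i}\prec_\Omega\zeta_{v,i'}$, with other ties broken arbitrarily. $\mathscr{M}$ is built by scanning $\Omega$ in $\prec_\Omega$-order, starting from $\mathscr{M}=\emptyset$, and adding a cycle $\zeta$ to $\mathscr{M}$ iff $[\zeta]$ is not in the span of the classes of the cycles already in $\mathscr{M}$. (Then $|\mathscr{M}|=m=\dim H_p(\mathsf{K})$.) *)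

theory Defs
  imports "HOL-Analysis.Analysis"
begin

definition simplicial_complex :: "'a set set \<Rightarrow> bool" where
  "simplicial_complex K \<longleftrightarrow> finite K \<and> (\<forall>\<sigma>\<in>K. finite \<sigma> \<and> \<sigma> \<noteq> {}) \<and>
     (\<forall>\<sigma>\<in>K. \<forall>\<tau>. \<tau> \<noteq> {} \<longrightarrow> \<tau> \<subseteq> \<sigma> \<longrightarrow> \<tau> \<in> K)"

definition simplices :: "'a set set \<Rightarrow> nat \<Rightarrow> 'a set set" where
  "simplices K p = {\<sigma>\<in>K. card \<sigma> = p + 1}"

text \<open>A Z2-chain is a (finite) set of simplices; addition is symmetric difference.\<close>
definition symdiff :: "'b set \<Rightarrow> 'b set \<Rightarrow> 'b set" where
  "symdiff A B = (A - B) \<union> (B - A)"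

definition chain_sum :: "'b set set \<Rightarrow> 'b set" where
  "chain_sum F = {x. odd (card {c\<in>F. x \<in> c})}"

definition is_facet :: "'a set \<Rightarrow> 'a set \<Rightarrow> bool" where
  "is_facet \<tau> \<sigma> \<longleftrightarrow> \<tau> \<noteq> {} \<and> \<tau> \<subset> \<sigma> \<and> card \<tau> + 1 = card \<sigma>"

definition bd :: "'a set set \<Rightarrow> 'a set set" where
  "bd c = {\<tau>. odd (card {\<sigma>\<in>c. is_facet \<tau> \<sigma>})}"

definition cycles :: "'a set set \<Rightarrow> nat \<Rightarrow> 'a set set set" where
  "cycles K p = {c. c \<subseteq> simplices K p \<and> bd c = {}}"

definition boundaries :: "'a set set \<Rightarrow> nat \<Rightarrow> 'a set set set" where
  "boundaries K p = {bd c | c. c \<subseteq> simplices K (p + 1)}"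

definition hclass :: "'a set set \<Rightarrow> nat \<Rightarrow> 'a set set \<Rightarrow> 'a set set set" where
  "hclass K p \<zeta> = {symdiff \<zeta> b | b. b \<in> boundaries K p}"

definition in_hspan :: "'a set set \<Rightarrow> nat \<Rightarrow> 'a set set \<Rightarrow> 'a set set set \<Rightarrow> bool" where
  "in_hspan K p \<zeta> S \<longleftrightarrow>
     (\<exists>F b. F \<subseteq> S \<and> finite F \<and> b \<in> boundaries K p \<and> \<zeta> = symdiff (chain_sum F) b)"

definition rv :: "'a::euclidean_space \<Rightarrow> 'a set \<Rightarrow> real" where
  "rv v \<sigma> = Max ((\<lambda>x. dist v x) ` \<sigma>)"

definition rv_chain :: "'a::euclidean_space \<Rightarrow> 'a set set \<Rightarrow> real" where
  "rv_chain v \<zeta> = Max ((\<lambda>\<sigma>. rv v \<sigma>) ` \<zeta>)"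

definition rP :: "'a::euclidean_space set \<Rightarrow> 'a set set \<Rightarrow> real" where
  "rP P \<zeta> = Min ((\<lambda>v. rv_chain v \<zeta>) ` P)"

definition rP_class :: "'a::euclidean_space set set \<Rightarrow> nat \<Rightarrow> 'a set \<Rightarrow> 'a set set \<Rightarrow> real" where
  "rP_class K p P \<zeta> = Min {rv_chain v \<eta> | v \<eta>. v \<in> P \<and> \<eta> \<in> hclass K p \<zeta> \<and> \<eta> \<noteq> {}}"

text \<open>Column j of the Z2 boundary matrix (as the set of its nonzero row indices).\<close>
definition bd_col :: "'a set list \<Rightarrow> nat \<Rightarrow> nat set" where
  "bd_col L j = {i. i < length L \<and> is_facet (L ! i) (L ! j)}"

text \<open>Reduce one column (pair: reduced column R_j, column V_j) against the already reduced
  earlier columns: while the column is nonzero and an earlier nonzero column has the same lowest one,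
  add that column. The fuel argument is large enough (each addition strictly lowers the low).\<close>
fun reduce_col :: "nat \<Rightarrow> (nat set \<times> nat set) list \<Rightarrow> nat set \<times> nat set \<Rightarrow> nat set \<times> nat set" where
  "reduce_col 0 prev c = c"
| "reduce_col (Suc k) prev (r, w) =
     (if r = {} then (r, w) else
      (case find (\<lambda>(r', w'). r' \<noteq> {} \<and> Max r' = Max r) prev of
         None \<Rightarrow> (r, w)
       | Some (r', w') \<Rightarrow> reduce_col k prev (symdiff r r', symdiff w w')))"

text \<open>Left-to-right reduction; V starts as the identity (column j = {j}).\<close>
fun reduction :: "nat \<Rightarrow> nat set list \<Rightarrow> (nat set \<times> nat set) list \<Rightarrow> (nat set \<times> nat set) list" where
  "reduction n [] acc = acc"
| "reduction n (c # cs) acc = reduction n cs (acc @ [reduce_col (n + 1) acc (c, {length acc})])"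

definition reduced :: "'a set list \<Rightarrow> (nat set \<times> nat set) list" where
  "reduced L = reduction (length L) (map (bd_col L) [0..<length L]) []"

definition ess_idx :: "'a set list \<Rightarrow> nat \<Rightarrow> nat list" where
  "ess_idx L p = filter (\<lambda>i. card (L ! i) = p + 1 \<and> fst (reduced L ! i) = {} \<and>
      i \<notin> {Max (fst c) | c. c \<in> set (reduced L) \<and> fst c \<noteq> {}}) [0..<length L]"

text \<open>The essential p-cycles V_i (as chains of simplices), listed in increasing order
  (the largest simplex of V_i is L!i, so this is the order of the filtration).\<close>
definition ess_cycles :: "'a set list \<Rightarrow> nat \<Rightarrow> 'a set set list" where
  "ess_cycles L p = map (\<lambda>i. (\<lambda>k. L ! k) ` snd (reduced L ! i)) (ess_idx L p)"

definition valid_filtration :: "'a::euclidean_space set set \<Rightarrow> 'a \<Rightarrow> 'a set list \<Rightarrow> bool" where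
  "valid_filtration K v L \<longleftrightarrow> distinct L \<and> set L = K \<and>
     (\<forall>i<length L. \<forall>j<length L. (L ! i \<subset> L ! j \<or> rv v (L ! i) < rv v (L ! j)) \<longrightarrow> i < j)"

text \<open>Om is a listing of \<Omega> (pairs (v,i) standing for \<zeta>_{v,i}, 0-indexed) in \<prec>_\<Omega> order.\<close>
definition valid_Omega_order ::
  "'a::euclidean_space set \<Rightarrow> ('a \<Rightarrow> 'a set set list) \<Rightarrow> ('a \<times> nat) list \<Rightarrow> bool" where
  "valid_Omega_order P Z Om \<longleftrightarrow> distinct Om \<and> set Om = {(v, i). v \<in> P \<and> i < length (Z v)} \<and>
     (\<forall>a<length Om. \<forall>b<length Om.
        (rv_chain (fst (Om ! a)) (Z (fst (Om ! a)) ! snd (Om ! a))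
           < rv_chain (fst (Om ! b)) (Z (fst (Om ! b)) ! snd (Om ! b))
         \<or> (fst (Om ! a) = fst (Om ! b) \<and> snd (Om ! a) < snd (Om ! b))) \<longrightarrow> a < b)"

fun greedy :: "'a set set \<Rightarrow> nat \<Rightarrow> 'a set set list \<Rightarrow> 'a set set list \<Rightarrow> 'a set set list" where
  "greedy K p acc [] = acc"
| "greedy K p acc (z # zs) = greedy K p (if in_hspan K p z (set acc) then acc else acc @ [z]) zs"

definition build_M ::
  "'a set set \<Rightarrow> nat \<Rightarrow> ('a \<Rightarrow> 'a set set list) \<Rightarrow> ('a \<times> nat) list \<Rightarrow> 'a set set list" where
  "build_M K p Z Om = greedy K p [] (map (\<lambda>(v, i). Z v ! i) Om)"

end

theory Submission
  imports Defs "HOL-Library.Function_Algebras" "HOL-Library.Z2"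
begin

declare add_bit_eq_xor[simp del] mult_bit_eq_and[simp del]

definition zsc :: "bit \<Rightarrow> ('x \<Rightarrow> bit) \<Rightarrow> ('x \<Rightarrow> bit)" where "zsc c f = (\<lambda>x. c * f x)"
interpretation Z: vector_space "zsc :: bit \<Rightarrow> ('x \<Rightarrow> bit) \<Rightarrow> _"
  by unfold_locales (auto simp: zsc_def fun_eq_iff algebra_simps)

lemma bit_add_self[simp]: "(x::bit) + x = 0" by (cases x) auto
lemma fun_add_self[simp]: "(f::'x \<Rightarrow> bit) + f = 0" by (auto simp: fun_eq_iff)
lemma fun_minus_eq: "(f::'x \<Rightarrow> bit) - g = f + g" by (auto simp: fun_eq_iff)
lemma zsc_0[simp]: "zsc 0 f = 0" by (auto simp: zsc_def fun_eq_iff)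
lemma zsc_1[simp]: "zsc 1 f = f" by (auto simp: zsc_def fun_eq_iff)

definition cv :: "'b set \<Rightarrow> 'b \<Rightarrow> bit" where "cv A = (\<lambda>x. of_bool (x \<in> A))"

lemma cv_empty[simp]: "cv {} = 0" by (auto simp: cv_def fun_eq_iff)
lemma cv_inj: "cv A = cv B \<Longrightarrow> A = B"
  by (auto simp: cv_def fun_eq_iff) (metis of_bool_eq_iff)+
lemma cv_inj_iff: "cv A = cv B \<longleftrightarrow> A = B" using cv_inj by blast
lemma inj_cv: "inj cv" by (rule injI) (rule cv_inj)
lemma cv_symdiff: "cv (symdiff A B) = cv A + cv B"
  by (auto simp: cv_def fun_eq_iff symdiff_def)

lemma sum_fun_apply: "(\<Sum>i\<in>A. (f i :: 'x \<Rightarrow> 'y::comm_monoid_add)) x = (\<Sum>i\<in>A. f i x)"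
  by (induct A rule: infinite_finite_induct) auto

lemma bit_of_bool_odd_Suc: "(of_bool (odd (Suc c)) :: bit) = 1 + of_bool (odd c)"
  by (cases "odd c") auto

lemma sum_of_bool_bit: "finite A \<Longrightarrow> (\<Sum>x\<in>A. (of_bool (P x) :: bit)) = of_bool (odd (card {x\<in>A. P x}))"
proof (induct A rule: finite_induct)
  case empty then show ?case by simp
next
  case (insert a A)
  show ?case
  proof (cases "P a")
    case True
    have e: "{x \<in> insert a A. P x} = insert a {x\<in>A. P x}" using True by auto
    have "card {x \<in> insert a A. P x} = Suc (card {x\<in>A. P x})"
      unfolding e using insert by simp
    then show ?thesis using insert True by (simp only: sum.insert bit_of_bool_odd_Suc) simp
  next
    case False
    have e: "{x \<in> insert a A. P x} = {x\<in>A. P x}" using False by auto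
    show ?thesis using insert False by (simp only: sum.insert e) simp
  qed
qed

lemma cv_chain_sum: "finite F \<Longrightarrow> cv (chain_sum F) = (\<Sum>c\<in>F. cv c)"
proof -
  assume f: "finite F"
  show ?thesis
  proof
    fix x
    have "(\<Sum>c\<in>F. cv c) x = (\<Sum>c\<in>F. of_bool (x \<in> c))" by (simp add: sum_fun_apply cv_def)
    also have "\<dots> = of_bool (odd (card {c\<in>F. x \<in> c}))" by (rule sum_of_bool_bit[OF f])
    finally show "cv (chain_sum F) x = (\<Sum>c\<in>F. cv c) x" by (simp add: cv_def chain_sum_def)
  qed
qed

lemma cv_bd: "finite c \<Longrightarrow> cv (bd c) = (\<Sum>\<sigma>\<in>c. cv (bd {\<sigma>}))"
proof -
  assume f: "finite c"
  have e: "{\<sigma>'\<in>{\<sigma>}. is_facet \<tau> \<sigma>'} = (if is_facet \<tau> \<sigma> then {\<sigma>} else {})" for \<tau> \<sigma> :: "'a set"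
    by auto
  have b1: "bd {\<sigma>} = {\<tau>. is_facet \<tau> \<sigma>}" for \<sigma> :: "'a set"
    unfolding bd_def e by auto
  show ?thesis
  proof
    fix \<tau>
    have "(\<Sum>\<sigma>\<in>c. cv (bd {\<sigma>})) \<tau> = (\<Sum>\<sigma>\<in>c. of_bool (is_facet \<tau> \<sigma>))" by (simp add: sum_fun_apply cv_def b1)
    also have "\<dots> = of_bool (odd (card {\<sigma>\<in>c. is_facet \<tau> \<sigma>}))" by (rule sum_of_bool_bit[OF f])
    finally show "cv (bd c) \<tau> = (\<Sum>\<sigma>\<in>c. cv (bd {\<sigma>})) \<tau>" by (simp add: cv_def bd_def)
  qed
qed

lemma bit4: "(a::bit) + b = (a + i) + (b + i)" by (cases a; cases b; cases i) simp_all

lemma sum_symdiff_bit: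
  assumes "finite A" "finite B"
  shows "sum (f :: 'i \<Rightarrow> 'x \<Rightarrow> bit) (symdiff A B) = sum f A + sum f B"
proof -
  have e1: "A - (A \<inter> B) = A - B" "B - (A \<inter> B) = B - A" by auto
  have 1: "sum f A = sum f (A - B) + sum f (A \<inter> B)"
    using sum.subset_diff[of "A \<inter> B" A f] assms(1) unfolding e1 by auto
  have 2: "sum f B = sum f (B - A) + sum f (A \<inter> B)"
    using sum.subset_diff[of "A \<inter> B" B f] assms(2) unfolding e1 by auto
  have 3: "sum f (symdiff A B) = sum f (A - B) + sum f (B - A)"
    unfolding symdiff_def by (rule sum.union_disjoint) (use assms in auto)
  show ?thesis unfolding 1 2 3 by (simp add: fun_eq_iff bit4[symmetric])
qed

lemma bd_symdiff: "finite a \<Longrightarrow> finite b \<Longrightarrow> bd (symdiff a b) = symdiff (bd a) (bd b)"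
proof -
  assume fa: "finite a" and fb: "finite b"
  have fs: "finite (symdiff a b)" using fa fb by (simp add: symdiff_def)
  have "cv (bd (symdiff a b)) = sum (\<lambda>\<sigma>. cv (bd {\<sigma>})) (symdiff a b)" by (rule cv_bd[OF fs])
  also have "\<dots> = sum (\<lambda>\<sigma>. cv (bd {\<sigma>})) a + sum (\<lambda>\<sigma>. cv (bd {\<sigma>})) b" by (rule sum_symdiff_bit[OF fa fb])
  also have "\<dots> = cv (symdiff (bd a) (bd b))" by (simp only: cv_symdiff cv_bd[OF fa] cv_bd[OF fb])
  finally show ?thesis by (rule cv_inj)
qed

lemma bd_empty[simp]: "bd {} = {}" by (auto simp: bd_def)

lemma facet_facet_even:
  assumes "finite \<sigma>"
  shows "even (card {\<tau>. is_facet \<tau> \<sigma> \<and> is_facet \<rho> \<tau>})"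
proof (cases "{\<tau>. is_facet \<tau> \<sigma> \<and> is_facet \<rho> \<tau>} = {}")
  case True then show ?thesis unfolding True by simp
next
  case False
  then obtain \<tau>0 where t0: "is_facet \<tau>0 \<sigma>" "is_facet \<rho> \<tau>0" by auto
  have fr: "finite \<rho>" "finite \<tau>0" using t0 assms unfolding is_facet_def by (auto intro: finite_subset)
  have rs: "\<rho> \<subseteq> \<sigma>" "\<rho> \<noteq> {}" "card \<rho> + 2 = card \<sigma>" using t0 unfolding is_facet_def by auto
  have cd: "card (\<sigma> - \<rho>) = 2" using rs assms by (simp add: card_Diff_subset fr)
  have eq: "{\<tau>. is_facet \<tau> \<sigma> \<and> is_facet \<rho> \<tau>} = (\<lambda>x. insert x \<rho>) ` (\<sigma> - \<rho>)"
  proof (intro equalityI subsetI)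
    fix \<tau> assume "\<tau> \<in> {\<tau>. is_facet \<tau> \<sigma> \<and> is_facet \<rho> \<tau>}"
    then have h: "is_facet \<tau> \<sigma>" "is_facet \<rho> \<tau>" by auto
    then have ft: "finite \<tau>" using assms unfolding is_facet_def by (auto intro: finite_subset)
    have sub: "\<rho> \<subseteq> \<tau>" "card \<rho> + 1 = card \<tau>" "\<tau> \<subset> \<sigma>" using h unfolding is_facet_def by auto
    have fr': "finite \<rho>" using sub ft finite_subset by blast
    have "card (\<tau> - \<rho>) = 1" using card_Diff_subset[OF fr' sub(1)] sub(2) by simp
    then obtain x where x: "\<tau> - \<rho> = {x}" by (auto simp: card_Suc_eq)
    then have "\<tau> = insert x \<rho>" using sub(1) by blast
    moreover have "x \<in> \<sigma> - \<rho>" using x sub(3) by blast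
    ultimately show "\<tau> \<in> (\<lambda>x. insert x \<rho>) ` (\<sigma> - \<rho>)" by blast
  next
    fix \<tau> assume "\<tau> \<in> (\<lambda>x. insert x \<rho>) ` (\<sigma> - \<rho>)"
    then obtain x where x: "x \<in> \<sigma>" "x \<notin> \<rho>" "\<tau> = insert x \<rho>" by auto
    have c: "card \<tau> = card \<rho> + 1" using x fr by simp
    have "\<tau> \<subseteq> \<sigma>" using x rs by auto
    moreover have "\<tau> \<noteq> \<sigma>" using c rs by auto
    ultimately show "\<tau> \<in> {\<tau>. is_facet \<tau> \<sigma> \<and> is_facet \<rho> \<tau>}"
      using x c rs unfolding is_facet_def by auto
  qed
  have "inj_on (\<lambda>x. insert x \<rho>) (\<sigma> - \<rho>)" by (rule inj_onI) (metis Diff_iff insertE insertI1)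
  then show ?thesis unfolding eq using cd by (simp add: card_image)
qed

lemma facet_finite: "finite \<sigma> \<Longrightarrow> finite {\<tau>. is_facet \<tau> \<sigma> \<and> Q \<tau>}"
  by (rule finite_subset[of _ "Pow \<sigma>"]) (auto simp: is_facet_def)

lemma bd_single: "bd {\<sigma>} = {\<tau>. is_facet \<tau> \<sigma>}"
proof -
  have e: "{\<sigma>'\<in>{\<sigma>}. is_facet \<tau> \<sigma>'} = (if is_facet \<tau> \<sigma> then {\<sigma>} else {})" for \<tau> by auto
  show ?thesis unfolding bd_def e by auto
qed

lemma bd_subset: "bd c \<subseteq> (\<Union>\<sigma>\<in>c. Pow \<sigma>)"
proof
  fix \<tau> assume "\<tau> \<in> bd c"
  then have "{\<sigma>\<in>c. is_facet \<tau> \<sigma>} \<noteq> {}" unfolding bd_def by (metis (no_types) card.empty even_zero mem_Collect_eq)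
  then show "\<tau> \<in> (\<Union>\<sigma>\<in>c. Pow \<sigma>)" by (auto simp: is_facet_def)
qed

lemma finite_bd: "finite c \<Longrightarrow> \<forall>\<sigma>\<in>c. finite \<sigma> \<Longrightarrow> finite (bd c)"
  by (rule finite_subset[OF bd_subset]) auto

lemma bd_bd_single: "finite \<sigma> \<Longrightarrow> bd (bd {\<sigma>}) = {}"
proof -
  assume f: "finite \<sigma>"
  have "{\<tau>\<in>bd {\<sigma>}. is_facet \<rho> \<tau>} = {\<tau>. is_facet \<tau> \<sigma> \<and> is_facet \<rho> \<tau>}" for \<rho>
    unfolding bd_single by auto
  then show ?thesis using facet_facet_even[OF f] unfolding bd_def[of "bd {\<sigma>}"] by auto
qed

lemma insert_symdiff: "x \<notin> A \<Longrightarrow> insert x A = symdiff {x} A"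
  by (auto simp: symdiff_def)

lemma bd_bd: "finite c \<Longrightarrow> \<forall>\<sigma>\<in>c. finite \<sigma> \<Longrightarrow> bd (bd c) = {}"
proof (induct c rule: finite_induct)
  case empty then show ?case by simp
next
  case (insert \<sigma> c)
  have f1: "finite (bd {\<sigma>})" "finite (bd c)" using insert by (auto intro!: finite_bd)
  have "bd (insert \<sigma> c) = symdiff (bd {\<sigma>}) (bd c)"
    unfolding insert_symdiff[OF insert(2)] using insert(1) by (simp add: bd_symdiff)
  then have "bd (bd (insert \<sigma> c)) = symdiff (bd (bd {\<sigma>})) (bd (bd c))"
    using f1 by (simp add: bd_symdiff)
  then show ?case using insert by (simp add: bd_bd_single symdiff_def)
qed

definition colok :: "'a set list \<Rightarrow> nat \<Rightarrow> nat set \<times> nat set \<Rightarrow> bool" where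
  "colok L j c \<longleftrightarrow> finite (snd c) \<and> snd c \<subseteq> {..j} \<and> j \<in> snd c \<and> fst c \<subseteq> {..<length L} \<and>
     cv (fst c) = (\<Sum>k\<in>snd c. cv (bd_col L k)) \<and> (\<forall>k\<in>snd c. card (L!k) = card (L!j))"

definition Inv :: "'a set list \<Rightarrow> (nat set \<times> nat set) list \<Rightarrow> bool" where
  "Inv L acc \<longleftrightarrow> (\<forall>j<length acc. colok L j (acc!j)) \<and>
     (\<forall>i<length acc. \<forall>j<length acc. i \<noteq> j \<longrightarrow> fst (acc!i) \<noteq> {} \<longrightarrow> fst (acc!j) \<noteq> {} \<longrightarrow>
        Max (fst (acc!i)) \<noteq> Max (fst (acc!j)))"

lemma sum_nonzero_ex: "(\<Sum>k\<in>A. f k) x \<noteq> (0::bit) \<Longrightarrow> \<exists>k\<in>A. f k x \<noteq> 0"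
  by (metis (mono_tags, lifting) sum.neutral sum_fun_apply)

lemma colok_facet_card:
  assumes "colok L j c" "x \<in> fst c"
  shows "card (L!x) + 1 = card (L!j)"
proof -
  have "cv (fst c) x = 1" using assms(2) by (simp add: cv_def)
  moreover have "cv (fst c) = (\<Sum>k\<in>snd c. cv (bd_col L k))" using assms(1) unfolding colok_def by blast
  ultimately have "(\<Sum>k\<in>snd c. cv (bd_col L k)) x \<noteq> 0" by simp
  from sum_nonzero_ex[OF this] obtain k where k: "k \<in> snd c" "cv (bd_col L k) x \<noteq> 0" by blast
  then have "x \<in> bd_col L k" unfolding cv_def by (cases "x \<in> bd_col L k") auto
  then have "is_facet (L!x) (L!k)" by (simp add: bd_col_def)
  then have "card (L!x) + 1 = card (L!k)" by (simp add: is_facet_def)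
  moreover have "card (L!k) = card (L!j)" using k(1) assms(1) unfolding colok_def by blast
  ultimately show ?thesis by simp
qed

lemma colokD:
  assumes "colok L j c"
  shows "finite (snd c)" "snd c \<subseteq> {..j}" "j \<in> snd c" "fst c \<subseteq> {..<length L}"
    "cv (fst c) = (\<Sum>k\<in>snd c. cv (bd_col L k))" "\<And>k. k \<in> snd c \<Longrightarrow> card (L!k) = card (L!j)"
  using assms unfolding colok_def by blast+

lemma colokI:
  assumes "finite (snd c)" "snd c \<subseteq> {..j}" "j \<in> snd c" "fst c \<subseteq> {..<length L}"
    "cv (fst c) = (\<Sum>k\<in>snd c. cv (bd_col L k))" "\<And>k. k \<in> snd c \<Longrightarrow> card (L!k) = card (L!j)"
  shows "colok L j c"
  using assms unfolding colok_def by blast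

lemma reduce_col_ok:
  assumes "Inv L prev" "j = length prev"
  shows "colok L j (r, w) \<Longrightarrow> (r \<noteq> {} \<longrightarrow> Max r < k) \<Longrightarrow>
    colok L j (reduce_col k prev (r, w)) \<and>
    (fst (reduce_col k prev (r, w)) = {} \<or>
      (\<forall>i<j. fst (prev!i) \<noteq> {} \<longrightarrow> Max (fst (prev!i)) \<noteq> Max (fst (reduce_col k prev (r, w)))))"
proof (induct k arbitrary: r w)
  case 0
  then show ?case by auto
next
  case (Suc k)
  show ?case
  proof (cases "r = {}")
    case True then show ?thesis using Suc by simp
  next
    case rne: False
    show ?thesis
    proof (cases "find (\<lambda>(r', w'). r' \<noteq> {} \<and> Max r' = Max r) prev")
      case None
      then have "\<forall>i<j. \<not> (fst (prev!i) \<noteq> {} \<and> Max (fst (prev!i)) = Max r)"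
        unfolding find_None_iff using assms(2) by (metis (mono_tags, lifting) case_prod_beta nth_mem)
      moreover have "reduce_col (Suc k) prev (r, w) = (r, w)" using None rne by simp
      ultimately show ?thesis using Suc.prems(1) by auto
    next
      case (Some a)
      obtain r' w' where a: "a = (r', w')" by (cases a)
      from Some[unfolded find_Some_iff] obtain i where i0: "i < length prev" "(\<lambda>(r', w'). r' \<noteq> {} \<and> Max r' = Max r) (prev!i)" "a = prev!i"
        by (elim exE conjE) (rule that)
      then have i: "i < length prev" "r' \<noteq> {}" "Max r' = Max r" "prev!i = (r', w')"
        using a by auto
      have ci: "colok L i (r', w')" using assms(1) i(1,4) unfolding Inv_def by (metis (no_types))
      have cj: "colok L j (r, w)" by fact
      have fr: "finite r" "finite r'" using colokD(4)[OF ci] colokD(4)[OF cj] by (auto intro: finite_subset)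
      have mr: "Max r \<in> r" "Max r \<in> r'" using Max_in[OF fr(1) rne] Max_in[OF fr(2) i(2)] i(3) by auto
      have cardij: "card (L!i) = card (L!j)"
        using colok_facet_card[OF ci, of "Max r"] colok_facet_card[OF cj, of "Max r"] mr by simp
      have ij: "i < j" using i assms by simp
      have c2: "colok L j (symdiff r r', symdiff w w')"
      proof (rule colokI, simp_all only: fst_conv snd_conv)
        have fw: "finite w" "finite w'" using colokD(1)[OF ci] colokD(1)[OF cj] by auto
        then show "finite (symdiff w w')" by (simp add: symdiff_def)
        show "symdiff w w' \<subseteq> {..j}" using colokD(2)[OF ci] colokD(2)[OF cj] ij unfolding symdiff_def by auto
        show "j \<in> symdiff w w'" using colokD(2)[OF ci] colokD(3)[OF cj] ij unfolding symdiff_def by auto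
        show "symdiff r r' \<subseteq> {..<length L}" using colokD(4)[OF ci] colokD(4)[OF cj] unfolding symdiff_def by auto
        have e1: "cv r = (\<Sum>k\<in>w. cv (bd_col L k))" "cv r' = (\<Sum>k\<in>w'. cv (bd_col L k))"
          using colokD(5)[OF ci] colokD(5)[OF cj] by simp_all
        show "cv (symdiff r r') = (\<Sum>k\<in>symdiff w w'. cv (bd_col L k))"
          unfolding cv_symdiff e1 sum_symdiff_bit[OF fw] ..
        fix k assume "k \<in> symdiff w w'"
        then show "card (L!k) = card (L!j)" using colokD(6)[OF ci, of k] colokD(6)[OF cj, of k] cardij
          unfolding symdiff_def by auto
      qed
      have mx: "symdiff r r' \<noteq> {} \<longrightarrow> Max (symdiff r r') < k"
      proof
        assume ne: "symdiff r r' \<noteq> {}"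
        have fs: "finite (symdiff r r')" using fr by (simp add: symdiff_def)
        have "\<forall>y\<in>symdiff r r'. y < Max r"
        proof
          fix y assume y: "y \<in> symdiff r r'"
          have "y \<le> Max r" using y fr i(3) Max_ge[of r y] Max_ge[of r' y] unfolding symdiff_def by auto
          moreover have "y \<noteq> Max r" using y mr unfolding symdiff_def by auto
          ultimately show "y < Max r" by simp
        qed
        then have "Max (symdiff r r') < Max r" using fs ne by (simp add: Max_less_iff)
        then show "Max (symdiff r r') < k" using Suc.prems(2) rne by simp
      qed
      have eq: "reduce_col (Suc k) prev (r, w) = reduce_col k prev (symdiff r r', symdiff w w')"
        using rne Some a by simp
      show ?thesis unfolding eq using Suc.hyps[OF c2 mx] .
    qed
  qed
qed

lemma colok_init: "j < length L \<Longrightarrow> colok L j (bd_col L j, {j})"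
  unfolding colok_def by (auto simp: bd_col_def)

lemma reduction_ok:
  "Inv L acc \<Longrightarrow> cs = map (bd_col L) [length acc..<length acc + length cs] \<Longrightarrow>
   length acc + length cs \<le> length L \<Longrightarrow>
   Inv L (reduction (length L) cs acc) \<and> length (reduction (length L) cs acc) = length acc + length cs"
proof (induct cs arbitrary: acc)
  case Nil then show ?case by simp
next
  case (Cons c cs)
  let ?j = "length acc"
  have cj: "c = bd_col L ?j" and cs: "cs = map (bd_col L) [Suc ?j..<Suc ?j + length cs]"
    using Cons.prems(2) by (simp_all add: upt_conv_Cons del: upt_Suc)
  have jl: "?j < length L" using Cons.prems(3) by simp
  define x where "x = reduce_col (length L + 1) acc (c, {?j})"
  have r: "colok L ?j x \<and> (fst x = {} \<or> (\<forall>i<?j. fst (acc!i) \<noteq> {} \<longrightarrow> Max (fst (acc!i)) \<noteq> Max (fst x)))"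
    unfolding x_def cj
    by (rule reduce_col_ok[OF Cons.prems(1) refl colok_init[OF jl]])
       (use jl in \<open>auto simp: bd_col_def\<close>)
  have inv2: "Inv L (acc @ [x])"
    unfolding Inv_def
  proof (intro conjI allI impI)
    fix j assume "j < length (acc @ [x])"
    show "colok L j ((acc @ [x]) ! j)"
    proof (cases "j < ?j")
      case True then show ?thesis using Cons.prems(1) unfolding Inv_def by (simp add: nth_append)
    next
      case False then have "j = ?j" using \<open>j < length (acc @ [x])\<close> by simp
      then show ?thesis using r by (simp add: nth_append)
    qed
  next
    fix i j assume h: "i < length (acc @ [x])" "j < length (acc @ [x])" "i \<noteq> j"
      "fst ((acc @ [x]) ! i) \<noteq> {}" "fst ((acc @ [x]) ! j) \<noteq> {}"
    show "Max (fst ((acc @ [x]) ! i)) \<noteq> Max (fst ((acc @ [x]) ! j))"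
    proof (cases "i < ?j")
      case True
      show ?thesis
      proof (cases "j < ?j")
        case True
        then show ?thesis using \<open>i < ?j\<close> h Cons.prems(1) unfolding Inv_def by (simp add: nth_append)
      next
        case False
        then have "j = ?j" using h by simp
        have "(acc @ [x]) ! j = x" "(acc @ [x]) ! i = acc ! i" using \<open>j = ?j\<close> \<open>i < ?j\<close> by (simp_all add: nth_append)
        then show ?thesis using \<open>i < ?j\<close> h r by auto
      qed
    next
      case False
      then have "i = ?j" using h by simp
      then have "j < ?j" using h by simp
      have "(acc @ [x]) ! i = x" "(acc @ [x]) ! j = acc ! j" using \<open>i = ?j\<close> \<open>j < ?j\<close> by (simp_all add: nth_append)
      then show ?thesis using \<open>j < ?j\<close> h r by auto
    qed
  qed
  have "Inv L (reduction (length L) cs (acc @ [x])) \<and>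
        length (reduction (length L) cs (acc @ [x])) = length (acc @ [x]) + length cs"
    by (rule Cons.hyps[OF inv2]) (use cs Cons.prems(3) in auto)
  then show ?case unfolding x_def by simp
qed

lemma reduced_ok: "Inv L (reduced L) \<and> length (reduced L) = length L"
  unfolding reduced_def using reduction_ok[of L "[]" "map (bd_col L) [0..<length L]"]
  by (simp add: Inv_def)

locale filt =
  fixes K :: "'a set set" and L :: "'a set list"
  assumes sc: "simplicial_complex K" and dist: "distinct L" and setL: "set L = K"
begin

abbreviation "n \<equiv> length L"
abbreviation "red \<equiv> reduced L"
definition D :: "nat \<Rightarrow> nat \<Rightarrow> bit" where "D k = cv (bd_col L k)"

lemma red_len: "length red = n" using reduced_ok by blast
lemma red_inv: "Inv L red" using reduced_ok by blast
lemma red_colok: "j < n \<Longrightarrow> colok L j (red!j)" using red_inv red_len unfolding Inv_def by auto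
lemma red_low_distinct: "i < n \<Longrightarrow> j < n \<Longrightarrow> fst (red!i) \<noteq> {} \<Longrightarrow> fst (red!j) \<noteq> {} \<Longrightarrow>
  Max (fst (red!i)) = Max (fst (red!j)) \<Longrightarrow> i = j"
  using red_inv red_len unfolding Inv_def by metis

lemma L_in: "k < n \<Longrightarrow> L!k \<in> K" using setL nth_mem by blast
lemma L_fin: "k < n \<Longrightarrow> finite (L!k)" using sc L_in unfolding simplicial_complex_def by blast

lemma facet_in_K: "\<sigma> \<in> K \<Longrightarrow> is_facet \<tau> \<sigma> \<Longrightarrow> \<tau> \<in> K"
  using sc unfolding simplicial_complex_def is_facet_def by blast

lemma bdbd_idx:
  assumes k: "k < n"
  shows "(\<Sum>i\<in>bd_col L k. D i) = 0"
proof
  fix x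
  have fb: "finite (bd_col L k)" by (simp add: bd_col_def)
  have "(\<Sum>i\<in>bd_col L k. D i) x = (\<Sum>i\<in>bd_col L k. of_bool (x \<in> bd_col L i))"
    by (simp add: sum_fun_apply D_def cv_def)
  also have "\<dots> = of_bool (odd (card {i\<in>bd_col L k. x \<in> bd_col L i}))" by (rule sum_of_bool_bit[OF fb])
  also have "even (card {i\<in>bd_col L k. x \<in> bd_col L i})"
  proof (cases "x < n")
    case False
    then have e: "{i\<in>bd_col L k. x \<in> bd_col L i} = {}" by (auto simp: bd_col_def)
    show ?thesis unfolding e by simp
  next
    case True
    let ?S = "{i\<in>bd_col L k. x \<in> bd_col L i}"
    have inj: "inj_on (nth L) ?S" by (rule inj_on_nth[OF dist]) (auto simp: bd_col_def)
    have "nth L ` ?S = {\<tau>. is_facet \<tau> (L!k) \<and> is_facet (L!x) \<tau>}"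
    proof (intro equalityI subsetI)
      fix \<tau> assume "\<tau> \<in> nth L ` ?S" then show "\<tau> \<in> {\<tau>. is_facet \<tau> (L!k) \<and> is_facet (L!x) \<tau>}"
        by (auto simp: bd_col_def)
    next
      fix \<tau> assume t: "\<tau> \<in> {\<tau>. is_facet \<tau> (L!k) \<and> is_facet (L!x) \<tau>}"
      then have "\<tau> \<in> set L" using facet_in_K[OF L_in[OF k]] setL by auto
      then obtain i where i: "i < n" "L!i = \<tau>" by (auto simp: in_set_conv_nth)
      then have "i \<in> ?S" using t True k by (auto simp: bd_col_def)
      then show "\<tau> \<in> nth L ` ?S" using i by blast
    qed
    then have "card ?S = card {\<tau>. is_facet \<tau> (L!k) \<and> is_facet (L!x) \<tau>}"
      using card_image[OF inj] by simp
    then show ?thesis using facet_facet_even[OF L_fin[OF k]] by simp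
  qed
  then have "(of_bool (odd (card {i\<in>bd_col L k. x \<in> bd_col L i})) :: bit) = 0" by simp
  finally show "(\<Sum>i\<in>bd_col L k. D i) x = 0 x" by simp
qed

definition bdm :: "(nat \<Rightarrow> bit) \<Rightarrow> (nat \<Rightarrow> bit)" where
  "bdm x = (\<Sum>i<n. zsc (x i) (D i))"

lemma bdm_add: "bdm (x + y) = bdm x + bdm y"
  unfolding bdm_def by (simp add: zsc_def sum.distrib[symmetric] algebra_simps fun_eq_iff sum_fun_apply)

lemma bdm_zero: "bdm 0 = 0" unfolding bdm_def by (simp add: fun_eq_iff sum_fun_apply zsc_def)

lemma bdm_sum: "bdm (sum f A) = (\<Sum>a\<in>A. bdm (f a))"
proof (induct A rule: infinite_finite_induct)
  case (infinite A) then show ?case by (simp only: sum.infinite[OF infinite] bdm_zero)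
next
  case empty then show ?case by (simp only: sum.empty bdm_zero)
next
  case (insert x F) then show ?case by (simp only: sum.insert[OF insert(1,2)] bdm_add insert(3))
qed

lemma bdm_cv: "A \<subseteq> {..<n} \<Longrightarrow> bdm (cv A) = (\<Sum>i\<in>A. D i)"
proof -
  assume A: "A \<subseteq> {..<n}"
  have "bdm (cv A) = (\<Sum>i<n. if i \<in> A then D i else 0)"
    unfolding bdm_def cv_def by (intro sum.cong) auto
  also have "\<dots> = (\<Sum>i\<in>{..<n} \<inter> A. D i)" by (simp add: sum.If_cases)
  also have "{..<n} \<inter> A = A" using A by auto
  finally show ?thesis .
qed

lemma bdm_D: "k < n \<Longrightarrow> bdm (D k) = 0"
  using bdm_cv[of "bd_col L k"] bdbd_idx[of k] by (simp add: D_def bd_col_def subset_eq)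

lemma boundary_cycle: "k < n \<Longrightarrow> (\<Sum>i\<in>fst (red!k). D i) = 0"
proof -
  assume k: "k < n"
  have c: "colok L k (red!k)" by (rule red_colok[OF k])
  have "(\<Sum>i\<in>fst (red!k). D i) = bdm (cv (fst (red!k)))" using colokD(4)[OF c] by (simp add: bdm_cv)
  also have "\<dots> = (\<Sum>k'\<in>snd (red!k). bdm (D k'))" using colokD(5)[OF c] by (simp add: bdm_sum D_def)
  also have "\<dots> = 0" using colokD(2)[OF c] k by (intro sum.neutral) (auto intro!: bdm_D)
  finally show ?thesis .
qed

end

lemma span_le: "A \<subseteq> Z.span B \<Longrightarrow> Z.span A \<subseteq> Z.span B"
  by (rule Z.span_minimal) auto

lemma zsc_cases: "zsc c f = 0 \<or> zsc c f = f"
  by (cases c) auto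

lemma Max_symdiff:
  assumes "finite A" "finite B" "A \<noteq> {}" "B \<noteq> {}" "Max A < Max B"
  shows "symdiff A B \<noteq> {} \<and> Max (symdiff A B) = Max B"
proof -
  have mb: "Max B \<in> B" using assms Max_in by blast
  have "Max B \<notin> A" using assms(1,5) Max_ge not_le by blast
  then have m: "Max B \<in> symdiff A B" using mb unfolding symdiff_def by blast
  have "\<forall>y\<in>symdiff A B. y \<le> Max B"
  proof
    fix y assume "y \<in> symdiff A B"
    then have "y \<in> A \<or> y \<in> B" by (auto simp: symdiff_def)
    then show "y \<le> Max B"
    proof
      assume "y \<in> A" then show ?thesis using Max_ge[OF assms(1) \<open>y \<in> A\<close>] assms(5) by (meson le_less_trans less_imp_le)
    next
      assume "y \<in> B" then show ?thesis using Max_ge[OF assms(2) \<open>y \<in> B\<close>] by blast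
    qed
  qed
  moreover have "finite (symdiff A B)" using assms by (simp add: symdiff_def)
  ultimately show ?thesis using m by (intro conjI) (auto intro!: Max_eqI)
qed

lemma symdiff_comm: "symdiff A B = symdiff B A" by (auto simp: symdiff_def)

lemma LOW:
  assumes "finite F"
  shows "(\<forall>A\<in>F. finite A \<and> A \<noteq> {}) \<Longrightarrow> inj_on Max F \<Longrightarrow> finite B \<Longrightarrow> B \<noteq> {} \<Longrightarrow>
    cv B \<in> Z.span (cv ` F) \<Longrightarrow> \<exists>A\<in>F. Max B = Max A"
  using assms
proof (induct F arbitrary: B rule: finite_induct)
  case empty
  then have "cv B = 0" by simp
  then have "B = {}" using cv_inj by (metis cv_empty)
  then show ?case using empty by simp
next
  case (insert A F)
  have fa: "finite A" "A \<noteq> {}" using insert.prems by auto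
  have hF: "\<forall>A\<in>F. finite A \<and> A \<noteq> {}" "inj_on Max F" using insert.prems by (auto simp: inj_on_insert)
  have mA: "\<forall>A'\<in>F. Max A' \<noteq> Max A" using insert.prems(2) insert.hyps(2) by (auto simp: inj_on_def)
  from insert.prems(5) obtain c where c: "cv B - zsc c (cv A) \<in> Z.span (cv ` F)"
    by (auto simp: Z.span_breakdown_eq)
  show ?case
  proof (cases "zsc c (cv A) = 0")
    case True
    then have "cv B \<in> Z.span (cv ` F)" using c unfolding True diff_zero by blast
    then show ?thesis using insert.hyps(3)[OF hF insert.prems(3,4)] by blast
  next
    case False
    then have "zsc c (cv A) = cv A" using zsc_cases by blast
    then have s: "cv (symdiff B A) \<in> Z.span (cv ` F)" using c by (simp add: fun_minus_eq cv_symdiff)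
    show ?thesis
    proof (cases "Max B = Max A")
      case True then show ?thesis by blast
    next
      case ne: False
      show ?thesis
      proof (cases "Max B < Max A")
        case True
        from Max_symdiff[OF insert.prems(3) fa(1) insert.prems(4) fa(2) True]
        have sd: "symdiff B A \<noteq> {}" "Max (symdiff B A) = Max A" by auto
        have "finite (symdiff B A)" using fa insert.prems(3) by (simp add: symdiff_def)
        from insert.hyps(3)[OF hF this sd(1) s] obtain A' where "A' \<in> F" "Max (symdiff B A) = Max A'" by blast
        then show ?thesis using sd mA by auto
      next
        case False
        then have lt: "Max A < Max B" using ne by simp
        from Max_symdiff[OF fa(1) insert.prems(3) fa(2) insert.prems(4) lt]
        have sd: "symdiff B A \<noteq> {}" "Max (symdiff B A) = Max B" by (auto simp: symdiff_comm)
        have "finite (symdiff B A)" using fa insert.prems(3) by (simp add: symdiff_def)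
        from insert.hyps(3)[OF hF this sd(1) s] obtain A' where "A' \<in> F" "Max (symdiff B A) = Max A'" by blast
        then show ?thesis using sd by auto
      qed
    qed
  qed
qed

lemma addbb: "(a::'x\<Rightarrow>bit) + b + b = a" by (simp add: add.assoc)

lemma symdiff_finite: "finite A \<Longrightarrow> finite B \<Longrightarrow> finite (symdiff A B)" by (simp add: symdiff_def)

lemma symdiff_below:
  assumes "A \<subseteq> {..t}" "B \<subseteq> {..(t::nat)}" "t \<in> A" "t \<in> B"
  shows "symdiff A B \<subseteq> {..<t}"
proof
  fix x assume "x \<in> symdiff A B"
  then have "x \<le> t" "x \<noteq> t" using assms unfolding symdiff_def by auto
  then show "x \<in> {..<t}" by simp
qed

context filt
begin

lemma D_span: "i < n \<Longrightarrow> D i \<in> Z.span ((\<lambda>k. cv (fst (red!k))) ` {..i})"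
proof (induct i rule: less_induct)
  case (less i)
  have c: "colok L i (red!i)" by (rule red_colok[OF less.prems])
  let ?w = "snd (red!i)"
  have fw: "finite ?w" and iw: "i \<in> ?w" and ws: "?w \<subseteq> {..i}" using colokD[OF c] by auto
  have e: "cv (fst (red!i)) = (\<Sum>k\<in>?w. D k)" using colokD(5)[OF c] by (simp add: D_def)
  also have "\<dots> = D i + (\<Sum>k\<in>?w - {i}. D k)" by (rule sum.remove[OF fw iw])
  finally have eqD: "D i = cv (fst (red!i)) + (\<Sum>k\<in>?w - {i}. D k)" by (simp add: addbb)
  have a1: "cv (fst (red!i)) \<in> Z.span ((\<lambda>k. cv (fst (red!k))) ` {..i})" by (intro Z.span_base) auto
  have a2: "(\<Sum>k\<in>?w - {i}. D k) \<in> Z.span ((\<lambda>k. cv (fst (red!k))) ` {..i})"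
  proof (rule Z.span_sum)
    fix k assume k: "k \<in> ?w - {i}"
    then have ki: "k < i" using ws by auto
    have "D k \<in> Z.span ((\<lambda>k. cv (fst (red!k))) ` {..k})" using less.hyps[OF ki] ki less.prems by simp
    also have "\<dots> \<subseteq> Z.span ((\<lambda>k. cv (fst (red!k))) ` {..i})" using ki by (intro Z.span_mono image_mono) auto
    finally show "D k \<in> Z.span ((\<lambda>k. cv (fst (red!k))) ` {..i})" .
  qed
  show ?case by (subst eqD) (rule Z.span_add[OF a1 a2])
qed

lemma ess_mem: "s \<in> set (ess_idx L p) \<longleftrightarrow> s < n \<and> card (L!s) = p + 1 \<and> fst (red!s) = {} \<and>
   s \<notin> {Max (fst c) | c. c \<in> set red \<and> fst c \<noteq> {}}"
  by (simp add: ess_idx_def)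

definition Gset :: "nat \<Rightarrow> nat \<Rightarrow> (nat \<Rightarrow> bit) set" where
  "Gset p t = (\<lambda>s. cv (snd (red!s))) ` {s \<in> set (ess_idx L p). s < t} \<union>
     (\<lambda>k. cv (fst (red!k))) ` {k. k < n \<and> fst (red!k) \<noteq> {} \<and> card (L!k) = p + 2}"

lemma Gset_mono: "t \<le> t' \<Longrightarrow> Gset p t \<subseteq> Gset p t'"
  unfolding Gset_def by auto

lemma red_fst_finite: "k < n \<Longrightarrow> finite (fst (red!k))"
  using colokD(4)[OF red_colok] finite_subset by blast

lemma KL: "\<forall>W. W \<subseteq> {..<t} \<longrightarrow> (\<forall>i\<in>W. i < n \<and> card (L!i) = p + 1) \<longrightarrow> (\<Sum>i\<in>W. D i) = 0 \<longrightarrow>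
   cv W \<in> Z.span (Gset p t)"
proof (induct t)
  case 0
  show ?case
  proof (intro allI impI)
    fix W :: "nat set" assume "W \<subseteq> {..<0}"
    then have "W = {}" by auto
    then have "cv W = 0" by simp
    then show "cv W \<in> Z.span (Gset p 0)" using Z.span_zero by metis
  qed
next
  case (Suc t)
  show ?case
  proof (intro allI impI)
    fix W assume W: "W \<subseteq> {..<Suc t}" "\<forall>i\<in>W. i < n \<and> card (L!i) = p + 1" "(\<Sum>i\<in>W. D i) = 0"
    have fW: "finite W" using W(1) finite_subset by blast
    have spm: "Z.span (Gset p t) \<subseteq> Z.span (Gset p (Suc t))" by (intro Z.span_mono Gset_mono) simp
    show "cv W \<in> Z.span (Gset p (Suc t))"
    proof (cases "t \<in> W")
      case False
      then have "W \<subseteq> {..<t}" using W(1) by (auto simp: less_Suc_eq)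
      then show ?thesis using Suc.hyps W spm by blast
    next
      case tW: True
      have tn: "t < n" and ct: "card (L!t) = p + 1" using W(2) tW by auto
      have c: "colok L t (red!t)" by (rule red_colok[OF tn])
      let ?w = "snd (red!t)" and ?r = "fst (red!t)"
      have fw: "finite ?w" and tw: "t \<in> ?w" and ws: "?w \<subseteq> {..t}" using colokD[OF c] by auto
      have sw: "(\<Sum>i\<in>?w. D i) = cv ?r" using colokD(5)[OF c] by (simp add: D_def)
      have wcard: "\<forall>i\<in>?w. i < n \<and> card (L!i) = p + 1" using colokD(6)[OF c] ws tn ct by fastforce
      have r_empty: "?r = {}"
      proof (rule ccontr)
        assume rne: "?r \<noteq> {}"
        let ?Y = "symdiff W ?w"
        have Ysub: "?Y \<subseteq> {..<t}" using W(1) ws tW tw by (intro symdiff_below) (auto simp: lessThan_Suc_atMost)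
        have "(\<Sum>i\<in>?Y. D i) = (\<Sum>i\<in>W. D i) + (\<Sum>i\<in>?w. D i)" by (rule sum_symdiff_bit[OF fW fw])
        then have sY: "(\<Sum>i\<in>?Y. D i) = cv ?r" using W(3) sw by simp
        let ?Fs = "(\<lambda>k. cv (fst (red!k))) ` {..<t}"
        have "(\<Sum>i\<in>?Y. D i) \<in> Z.span ?Fs"
        proof (rule Z.span_sum)
          fix y assume "y \<in> ?Y"
          then have yt: "y < t" using Ysub by auto
          have "D y \<in> Z.span ((\<lambda>k. cv (fst (red!k))) ` {..y})" using D_span yt tn by simp
          also have "\<dots> \<subseteq> Z.span ?Fs" using yt by (intro Z.span_mono image_mono) auto
          finally show "D y \<in> Z.span ?Fs" .
        qed
        then have rFs: "cv ?r \<in> Z.span ?Fs" using sY by simp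
        define F where "F = (\<lambda>k. fst (red!k)) ` {k. k < t \<and> fst (red!k) \<noteq> {}}"
        have "?Fs \<subseteq> insert 0 (cv ` F)"
        proof
          fix x assume "x \<in> ?Fs"
          then obtain k where k: "k < t" "x = cv (fst (red!k))" by auto
          show "x \<in> insert 0 (cv ` F)"
          proof (cases "fst (red!k) = {}")
            case True then show ?thesis using k by simp
          next
            case False then have "fst (red!k) \<in> F" using k unfolding F_def by blast
            then show ?thesis using k by blast
          qed
        qed
        then have "Z.span ?Fs \<subseteq> Z.span (cv ` F)" using Z.span_mono[of ?Fs "insert 0 (cv ` F)"] by simp
        then have rF: "cv ?r \<in> Z.span (cv ` F)" using rFs by blast
        have fF: "finite F" unfolding F_def by simp
        have neF: "\<forall>A\<in>F. finite A \<and> A \<noteq> {}" unfolding F_def using tn red_fst_finite by auto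
        have injF: "inj_on Max F"
        proof (rule inj_onI)
          fix A1 A2 assume "A1 \<in> F" "A2 \<in> F" "Max A1 = Max A2"
          then obtain k1 k2 where "k1 < t" "k2 < t" "A1 = fst (red!k1)" "A2 = fst (red!k2)"
            "fst (red!k1) \<noteq> {}" "fst (red!k2) \<noteq> {}" unfolding F_def by auto
          then show "A1 = A2" using red_low_distinct[of k1 k2] tn \<open>Max A1 = Max A2\<close> by simp
        qed
        from LOW[OF fF neF injF red_fst_finite[OF tn] rne rF]
        obtain A where "A \<in> F" "Max ?r = Max A" by blast
        then obtain k where "k < t" "fst (red!k) \<noteq> {}" "Max ?r = Max (fst (red!k))" unfolding F_def by auto
        then show False using red_low_distinct[of k t] tn rne by auto
      qed
      then have sw0: "(\<Sum>i\<in>?w. D i) = 0" using sw by simp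
      show ?thesis
      proof (cases "t \<in> set (ess_idx L p)")
        case True
        let ?W' = "symdiff W ?w"
        have W'sub: "?W' \<subseteq> {..<t}" using W(1) ws tW tw by (intro symdiff_below) (auto simp: lessThan_Suc_atMost)
        have W'c: "\<forall>i\<in>?W'. i < n \<and> card (L!i) = p + 1" using W(2) wcard unfolding symdiff_def by blast
        have "(\<Sum>i\<in>?W'. D i) = (\<Sum>i\<in>W. D i) + (\<Sum>i\<in>?w. D i)" by (rule sum_symdiff_bit[OF fW fw])
        then have W'0: "(\<Sum>i\<in>?W'. D i) = 0" using W(3) sw0 by simp
        have "cv ?W' \<in> Z.span (Gset p (Suc t))" using Suc.hyps W'sub W'c W'0 spm by blast
        moreover have "cv ?w \<in> Z.span (Gset p (Suc t))" using True by (intro Z.span_base) (auto simp: Gset_def)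
        ultimately have "cv ?W' + cv ?w \<in> Z.span (Gset p (Suc t))" by (rule Z.span_add)
        then show ?thesis by (simp add: cv_symdiff addbb)
      next
        case False
        then have "t \<in> {Max (fst c) | c. c \<in> set red \<and> fst c \<noteq> {}}" using ess_mem tn ct r_empty by blast
        then obtain cc where cc: "cc \<in> set red" "fst cc \<noteq> {}" "Max (fst cc) = t" by blast
        then obtain k where k: "k < n" "red!k = cc" using red_len by (auto simp: in_set_conv_nth)
        let ?R = "fst (red!k)"
        have ck: "colok L k (red!k)" by (rule red_colok[OF k(1)])
        have fR: "finite ?R" by (rule red_fst_finite[OF k(1)])
        have tR: "t \<in> ?R" using cc k fR Max_in by blast
        have ckk: "card (L!k) = p + 2" using colok_facet_card[OF ck tR] ct by simp
        have Rc: "\<forall>i\<in>?R. i < n \<and> card (L!i) = p + 1"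
          using colokD(4)[OF ck] colok_facet_card[OF ck] ckk by fastforce
        have Rle: "\<forall>i\<in>?R. i \<le> t" using cc k fR Max_ge by blast
        let ?W' = "symdiff W ?R"
        have W'sub: "?W' \<subseteq> {..<t}" using W(1) Rle tW tR by (intro symdiff_below) (auto simp: lessThan_Suc_atMost)
        have W'c: "\<forall>i\<in>?W'. i < n \<and> card (L!i) = p + 1" using W(2) Rc unfolding symdiff_def by blast
        have "(\<Sum>i\<in>?W'. D i) = (\<Sum>i\<in>W. D i) + (\<Sum>i\<in>?R. D i)" by (rule sum_symdiff_bit[OF fW fR])
        then have W'0: "(\<Sum>i\<in>?W'. D i) = 0" using W(3) boundary_cycle[OF k(1)] by simp
        have "cv ?W' \<in> Z.span (Gset p (Suc t))" using Suc.hyps W'sub W'c W'0 spm by blast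
        moreover have "cv ?R \<in> Z.span (Gset p (Suc t))" using k cc ckk by (intro Z.span_base) (auto simp: Gset_def)
        ultimately have "cv ?W' + cv ?R \<in> Z.span (Gset p (Suc t))" by (rule Z.span_add)
        then show ?thesis by (simp add: cv_symdiff addbb)
      qed
    qed
  qed
qed

end

context filt
begin

definition T :: "(nat \<Rightarrow> bit) \<Rightarrow> ('a set \<Rightarrow> bit)" where
  "T x = (\<lambda>s. \<Sum>i<n. x i * of_bool (L!i = s))"

lemma T_add: "T (x + y) = T x + T y"
  unfolding T_def by (rule ext) (simp add: algebra_simps sum.distrib)

lemma T_zsc: "T (zsc c x) = zsc c (T x)"
  unfolding T_def zsc_def by (rule ext) (simp only: sum_distrib_left mult.assoc)

lemma T_0: "T 0 = 0"
  unfolding T_def by (rule ext) simp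

lemma T_sum: "T (sum f A) = (\<Sum>a\<in>A. T (f a))"
proof (induct A rule: infinite_finite_induct)
  case (infinite A) then show ?case by (simp only: sum.infinite[OF infinite] T_0)
next
  case empty then show ?case by (simp only: sum.empty T_0)
next
  case (insert x F) then show ?case by (simp only: sum.insert[OF insert(1,2)] T_add insert(3))
qed

lemma T_span: "x \<in> Z.span S \<Longrightarrow> T x \<in> Z.span (T ` S)"
proof (induct rule: Z.span_induct_alt)
  case base then show ?case by (metis T_0 Z.span_zero)
next
  case (step c x y)
  have "T (zsc c x + y) = zsc c (T x) + T y" by (simp add: T_add T_zsc)
  moreover have "zsc c (T x) \<in> Z.span (T ` S)" using step by (intro Z.span_scale Z.span_base) auto
  ultimately show ?case using step(2) Z.span_add by metis
qed

lemma T_cv: "A \<subseteq> {..<n} \<Longrightarrow> T (cv A) = cv (nth L ` A)"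
proof
  fix s assume A: "A \<subseteq> {..<n}"
  have "T (cv A) s = (\<Sum>i\<in>{..<n}. of_bool (i \<in> A \<and> L!i = s))"
    unfolding T_def cv_def by (intro sum.cong) auto
  also have "\<dots> = of_bool (odd (card {i\<in>{..<n}. i \<in> A \<and> L!i = s}))" by (rule sum_of_bool_bit) simp
  also have "\<dots> = cv (nth L ` A) s"
  proof (cases "s \<in> nth L ` A")
    case True
    then obtain i0 where i0: "i0 \<in> A" "s = L!i0" by auto
    have "{i\<in>{..<n}. i \<in> A \<and> L!i = s} = {i0}"
      using i0 A dist by (auto simp: nth_eq_iff_index_eq)
    then show ?thesis using True by (simp add: cv_def)
  next
    case False
    then have e: "{i\<in>{..<n}. i \<in> A \<and> L!i = s} = {}" by auto
    show ?thesis using False unfolding e by (simp add: cv_def)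
  qed
  finally show "T (cv A) s = cv (nth L ` A) s" .
qed

lemma T_at: "j < n \<Longrightarrow> T x (L!j) = x j"
proof -
  assume j: "j < n"
  have "T x (L!j) = (\<Sum>i\<in>{..<n}. if i = j then x i else 0)"
    unfolding T_def using j dist by (intro sum.cong) (auto simp: nth_eq_iff_index_eq)
  also have "\<dots> = x j" using j by simp
  finally show ?thesis .
qed

lemma T_inj0: "T x = 0 \<Longrightarrow> (\<forall>j. n \<le> j \<longrightarrow> x j = 0) \<Longrightarrow> x = 0"
proof
  fix j assume h: "T x = 0" "\<forall>j. n \<le> j \<longrightarrow> x j = 0"
  show "x j = 0 j"
  proof (cases "j < n")
    case True then show ?thesis using T_at[OF True, of x] h(1) by simp
  next
    case False then show ?thesis using h(2) by simp
  qed
qed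

lemma bd_single_L: "k < n \<Longrightarrow> bd {L!k} = nth L ` bd_col L k"
proof -
  assume k: "k < n"
  have "bd {L!k} = {\<tau>. is_facet \<tau> (L!k)}" by (rule bd_single)
  also have "\<dots> = nth L ` bd_col L k"
  proof (intro equalityI subsetI)
    fix \<tau> assume t: "\<tau> \<in> {\<tau>. is_facet \<tau> (L!k)}"
    then have "\<tau> \<in> set L" using facet_in_K[OF L_in[OF k]] setL by auto
    then obtain i where "i < n" "L!i = \<tau>" by (auto simp: in_set_conv_nth)
    then show "\<tau> \<in> nth L ` bd_col L k" using t by (auto simp: bd_col_def)
  qed (auto simp: bd_col_def)
  finally show ?thesis .
qed

lemma cv_bd_L: "W \<subseteq> {..<n} \<Longrightarrow> cv (bd (nth L ` W)) = T (\<Sum>k\<in>W. D k)"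
proof -
  assume W: "W \<subseteq> {..<n}"
  have fW: "finite W" using W finite_subset by blast
  have inj: "inj_on (nth L) W" by (rule inj_on_nth[OF dist]) (use W in auto)
  have "cv (bd (nth L ` W)) = (\<Sum>\<sigma>\<in>nth L ` W. cv (bd {\<sigma>}))" by (rule cv_bd) (use fW in simp)
  also have "\<dots> = (\<Sum>k\<in>W. cv (bd {L!k}))" by (rule sum.reindex_cong[OF inj refl]) simp
  also have "\<dots> = (\<Sum>k\<in>W. T (D k))"
  proof (rule sum.cong[OF refl])
    fix k assume "k \<in> W"
    then have k: "k < n" using W by auto
    have "bd_col L k \<subseteq> {..<n}" by (auto simp: bd_col_def)
    then show "cv (bd {L!k}) = T (D k)" unfolding bd_single_L[OF k] D_def by (simp only: T_cv)
  qed
  also have "\<dots> = T (\<Sum>k\<in>W. D k)" by (simp add: T_sum)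
  finally show ?thesis .
qed

lemma sumD_support: "j \<ge> n \<Longrightarrow> (\<Sum>k\<in>W. D k) j = 0"
  by (simp add: sum_fun_apply D_def cv_def bd_col_def)

lemma chain_bd_red: "k < n \<Longrightarrow> bd (nth L ` snd (red!k)) = nth L ` fst (red!k)"
proof -
  assume k: "k < n"
  have c: "colok L k (red!k)" by (rule red_colok[OF k])
  have ws: "snd (red!k) \<subseteq> {..<n}" using colokD(2)[OF c] k by auto
  have "cv (bd (nth L ` snd (red!k))) = T (\<Sum>k'\<in>snd (red!k). D k')" by (rule cv_bd_L[OF ws])
  also have "\<dots> = T (cv (fst (red!k)))" using colokD(5)[OF c] by (simp add: D_def)
  also have "\<dots> = cv (nth L ` fst (red!k))" by (rule T_cv[OF colokD(4)[OF c]])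
  finally show ?thesis by (rule cv_inj)
qed

lemma ess_cycle_in: "\<zeta> \<in> set (ess_cycles L p) \<Longrightarrow> \<exists>s. s \<in> set (ess_idx L p) \<and> \<zeta> = nth L ` snd (red!s)"
  unfolding ess_cycles_def by auto

lemma ess_cycles_cycles: "\<zeta> \<in> set (ess_cycles L p) \<Longrightarrow> \<zeta> \<in> cycles K p"
proof -
  assume "\<zeta> \<in> set (ess_cycles L p)"
  then obtain s where s: "s \<in> set (ess_idx L p)" "\<zeta> = nth L ` snd (red!s)" using ess_cycle_in by blast
  have sn: "s < n" "card (L!s) = p + 1" "fst (red!s) = {}" using s(1) ess_mem by auto
  have c: "colok L s (red!s)" by (rule red_colok[OF sn(1)])
  have "\<zeta> \<subseteq> simplices K p"
  proof
    fix \<sigma> assume "\<sigma> \<in> \<zeta>"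
    then obtain k where "k \<in> snd (red!s)" "\<sigma> = L!k" using s by auto
    moreover then have "k < n" using colokD(2)[OF c] sn by auto
    ultimately show "\<sigma> \<in> simplices K p" using colokD(6)[OF c] sn L_in by (auto simp: simplices_def)
  qed
  moreover have "bd \<zeta> = {}" using chain_bd_red[OF sn(1)] sn(3) s(2) by simp
  ultimately show ?thesis by (simp add: cycles_def)
qed

lemma red_bd_in: "k < n \<Longrightarrow> card (L!k) = p + 2 \<Longrightarrow> nth L ` fst (red!k) \<in> boundaries K p"
proof -
  assume k: "k < n" "card (L!k) = p + 2"
  have c: "colok L k (red!k)" by (rule red_colok[OF k(1)])
  have "nth L ` snd (red!k) \<subseteq> simplices K (p + 1)"
  proof
    fix \<sigma> assume "\<sigma> \<in> nth L ` snd (red!k)"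
    then obtain k' where "k' \<in> snd (red!k)" "\<sigma> = L!k'" by auto
    moreover then have "k' < n" using colokD(2)[OF c] k by auto
    ultimately show "\<sigma> \<in> simplices K (p + 1)" using colokD(6)[OF c] k L_in by (auto simp: simplices_def)
  qed
  then show ?thesis unfolding boundaries_def using chain_bd_red[OF k(1)] by (metis (mono_tags, lifting) mem_Collect_eq)
qed

lemma KLc:
  fixes f :: "'a set \<Rightarrow> real"
  assumes ford: "\<forall>i<n. \<forall>j<n. f (L!i) < f (L!j) \<longrightarrow> i < j"
    and eta: "\<eta> \<in> cycles K p" "\<eta> \<noteq> {}"
  shows "cv \<eta> \<in> Z.span (cv ` {\<zeta> \<in> set (ess_cycles L p). Max (f ` \<zeta>) \<le> Max (f ` \<eta>)} \<union> cv ` boundaries K p)"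
proof -
  have es: "\<eta> \<subseteq> simplices K p" "bd \<eta> = {}" using eta(1) by (auto simp: cycles_def)
  define W where "W = {i. i < n \<and> L!i \<in> \<eta>}"
  have Wn: "W \<subseteq> {..<n}" unfolding W_def by auto
  have etaW: "\<eta> = nth L ` W"
  proof (intro equalityI subsetI)
    fix \<sigma> assume s: "\<sigma> \<in> \<eta>"
    then have "\<sigma> \<in> set L" using es(1) setL by (auto simp: simplices_def)
    then obtain i where "i < n" "L!i = \<sigma>" by (auto simp: in_set_conv_nth)
    then show "\<sigma> \<in> nth L ` W" using s unfolding W_def by blast
  qed (auto simp: W_def)
  have fW: "finite W" using Wn finite_subset by blast
  have Wne: "W \<noteq> {}" using eta(2) etaW by auto
  define t where "t = Max W"
  have tW: "t \<in> W" unfolding t_def using fW Wne Max_in by blast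
  have "\<forall>i\<in>W. i \<le> t" unfolding t_def using Max_ge[OF fW] by blast
  then have Wt: "W \<subseteq> {..<Suc t}" by auto
  have Wc: "\<forall>i\<in>W. i < n \<and> card (L!i) = p + 1" using es(1) unfolding W_def simplices_def by auto
  have "T (\<Sum>k\<in>W. D k) = cv (bd (nth L ` W))" using cv_bd_L[OF Wn] by simp
  also have "\<dots> = 0" using es(2) etaW by simp
  finally have "T (\<Sum>k\<in>W. D k) = 0" .
  then have W0: "(\<Sum>k\<in>W. D k) = 0" using T_inj0 sumD_support by blast
  have "cv W \<in> Z.span (Gset p (Suc t))" using KL Wt Wc W0 by blast
  then have "T (cv W) \<in> Z.span (T ` Gset p (Suc t))" by (rule T_span)
  then have ceta: "cv \<eta> \<in> Z.span (T ` Gset p (Suc t))" using T_cv[OF Wn] etaW by simp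
  have fin_eta: "finite \<eta>" using fW etaW by simp
  have tn: "t < n" using tW Wn by auto
  have "L!t \<in> \<eta>" using tW etaW by blast
  then have ft: "f (L!t) \<le> Max (f ` \<eta>)" using fin_eta by (simp add: Max_ge)
  have "T ` Gset p (Suc t) \<subseteq> cv ` {\<zeta> \<in> set (ess_cycles L p). Max (f ` \<zeta>) \<le> Max (f ` \<eta>)} \<union> cv ` boundaries K p"
  proof
    fix y assume "y \<in> T ` Gset p (Suc t)"
    then consider (e) s where "s \<in> set (ess_idx L p)" "s < Suc t" "y = T (cv (snd (red!s)))"
      | (b) k where "k < n" "fst (red!k) \<noteq> {}" "card (L!k) = p + 2" "y = T (cv (fst (red!k)))"
      unfolding Gset_def by auto
    then show "y \<in> cv ` {\<zeta> \<in> set (ess_cycles L p). Max (f ` \<zeta>) \<le> Max (f ` \<eta>)} \<union> cv ` boundaries K p"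
    proof cases
      case e
      have sn: "s < n" using e(1) ess_mem by blast
      have c: "colok L s (red!s)" by (rule red_colok[OF sn])
      have ws: "snd (red!s) \<subseteq> {..<n}" using colokD(2)[OF c] sn by auto
      let ?\<zeta> = "nth L ` snd (red!s)"
      have y: "y = cv ?\<zeta>" using e(3) T_cv[OF ws] by simp
      have zin: "?\<zeta> \<in> set (ess_cycles L p)" using e(1) unfolding ess_cycles_def by auto
      have fz: "finite ?\<zeta>" using colokD(1)[OF c] by simp
      have nz: "?\<zeta> \<noteq> {}" using colokD(3)[OF c] by auto
      have "\<forall>\<sigma>\<in>?\<zeta>. f \<sigma> \<le> f (L!s)"
      proof
        fix \<sigma> assume "\<sigma> \<in> ?\<zeta>"
        then obtain k where k: "k \<in> snd (red!s)" "\<sigma> = L!k" by auto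
        then have "k \<le> s" using colokD(2)[OF c] by auto
        then show "f \<sigma> \<le> f (L!s)" using ford k sn by (metis not_le order.strict_trans1)
      qed
      then have "Max (f ` ?\<zeta>) \<le> f (L!s)" using fz nz by simp
      also have "f (L!s) \<le> f (L!t)" using ford sn tn e(2) by (metis less_Suc_eq_le not_le)
      finally have "Max (f ` ?\<zeta>) \<le> Max (f ` \<eta>)" using ft by simp
      then show ?thesis using y zin by blast
    next
      case b
      have c: "colok L k (red!k)" by (rule red_colok[OF b(1)])
      have y: "y = cv (nth L ` fst (red!k))" using b(4) T_cv[OF colokD(4)[OF c]] by simp
      then show ?thesis using red_bd_in[OF b(1) b(3)] by blast
    qed
  qed
  then show ?thesis using ceta Z.span_mono by blast
qed

end

lemma simplices_finite: "simplicial_complex K \<Longrightarrow> finite (simplices K q)"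
  unfolding simplicial_complex_def simplices_def by auto

lemma simplices_fin_elems: "simplicial_complex K \<Longrightarrow> \<sigma> \<in> simplices K q \<Longrightarrow> finite \<sigma>"
  unfolding simplicial_complex_def simplices_def by auto

lemma chain_finite: "simplicial_complex K \<Longrightarrow> c \<subseteq> simplices K q \<Longrightarrow> finite c"
  using simplices_finite finite_subset by blast

lemma boundaries_eq: "boundaries K p = bd ` Pow (simplices K (p + 1))"
  unfolding boundaries_def by auto

lemma boundaries_finite: "simplicial_complex K \<Longrightarrow> finite (boundaries K p)"
  unfolding boundaries_eq using simplices_finite by auto

lemma empty_boundary: "{} \<in> boundaries K p"
  unfolding boundaries_def by (auto intro: exI[of _ "{}"])

lemma boundary_symdiff: "simplicial_complex K \<Longrightarrow> b1 \<in> boundaries K p \<Longrightarrow> b2 \<in> boundaries K p \<Longrightarrow>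
  symdiff b1 b2 \<in> boundaries K p"
proof -
  assume sc: "simplicial_complex K" and b: "b1 \<in> boundaries K p" "b2 \<in> boundaries K p"
  then obtain c1 c2 where c: "b1 = bd c1" "c1 \<subseteq> simplices K (p+1)" "b2 = bd c2" "c2 \<subseteq> simplices K (p+1)"
    unfolding boundaries_def by blast
  have f: "finite c1" "finite c2" using c chain_finite[OF sc] by blast+
  have "symdiff b1 b2 = bd (symdiff c1 c2)" using c f by (simp add: bd_symdiff)
  moreover have "symdiff c1 c2 \<subseteq> simplices K (p+1)" using c unfolding symdiff_def by auto
  ultimately show ?thesis unfolding boundaries_def by blast
qed

lemma boundary_props:
  assumes sc: "simplicial_complex K" and b: "b \<in> boundaries K p"
  shows "b \<subseteq> simplices K p" "finite b" "bd b = {}"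
proof -
  obtain c where c: "b = bd c" "c \<subseteq> simplices K (p+1)" using b unfolding boundaries_def by blast
  have fc: "finite c" using c chain_finite[OF sc] by blast
  have fs: "\<forall>\<sigma>\<in>c. finite \<sigma>" using c simplices_fin_elems[OF sc] by blast
  show "b \<subseteq> simplices K p"
  proof
    fix \<tau> assume "\<tau> \<in> b"
    then have "{\<sigma>\<in>c. is_facet \<tau> \<sigma>} \<noteq> {}" using c unfolding bd_def by (metis (no_types) card.empty even_zero mem_Collect_eq)
    then obtain \<sigma> where s: "\<sigma> \<in> c" "is_facet \<tau> \<sigma>" by blast
    then have "\<sigma> \<in> K" "card \<sigma> = p + 2" using c(2) by (auto simp: simplices_def)
    moreover have "\<tau> \<noteq> {}" "\<tau> \<subseteq> \<sigma>" "card \<tau> + 1 = card \<sigma>" using s(2) unfolding is_facet_def by auto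
    moreover have "\<forall>\<sigma>\<in>K. \<forall>\<tau>. \<tau> \<noteq> {} \<longrightarrow> \<tau> \<subseteq> \<sigma> \<longrightarrow> \<tau> \<in> K" using sc unfolding simplicial_complex_def by blast
    ultimately have "\<tau> \<in> K" "card \<tau> = p + 1" by auto
    then show "\<tau> \<in> simplices K p" unfolding simplices_def by simp
  qed
  then show "finite b" using chain_finite[OF sc] by blast
  show "bd b = {}" using c bd_bd[OF fc fs] by simp
qed

lemma cv_boundaries_subspace:
  assumes sc: "simplicial_complex K"
  shows "Z.subspace (cv ` boundaries K p)"
proof (rule Z.subspaceI)
  show "0 \<in> cv ` boundaries K p" using empty_boundary by (metis cv_empty image_eqI)
next
  fix x y assume "x \<in> cv ` boundaries K p" "y \<in> cv ` boundaries K p"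
  then obtain b1 b2 where "x = cv b1" "y = cv b2" "b1 \<in> boundaries K p" "b2 \<in> boundaries K p" by blast
  then show "x + y \<in> cv ` boundaries K p" using boundary_symdiff[OF sc] by (metis cv_symdiff image_eqI)
next
  fix c x assume "x \<in> cv ` boundaries K p"
  then show "zsc c x \<in> cv ` boundaries K p" using zsc_cases[of c x] empty_boundary by (metis cv_empty image_eqI)
qed

lemma span_BV: "simplicial_complex K \<Longrightarrow> Z.span (cv ` boundaries K p) = cv ` boundaries K p"
  using cv_boundaries_subspace Z.span_eq_iff by blast

lemma sum_zsc_bit: "finite A \<Longrightarrow> (\<Sum>c\<in>A. zsc (g c) (h c :: 'x \<Rightarrow> bit)) = (\<Sum>c\<in>{c\<in>A. g c = 1}. h c)"
proof -
  assume f: "finite A"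
  have "(\<Sum>c\<in>A. zsc (g c) (h c)) = (\<Sum>c\<in>A. if g c = 1 then h c else 0)"
    by (intro sum.cong refl) (metis bit_not_one_iff zsc_0 zsc_1)
  also have "\<dots> = (\<Sum>c\<in>{c\<in>A. g c = 1}. h c)" by (rule sum.inter_filter[OF f, symmetric])
  finally show ?thesis .
qed

lemma in_hspan_iff:
  assumes sc: "simplicial_complex K" and fS: "finite S"
  shows "in_hspan K p z S \<longleftrightarrow> cv z \<in> Z.span (cv ` S \<union> cv ` boundaries K p)"
proof
  assume "in_hspan K p z S"
  then obtain F b where Fb: "F \<subseteq> S" "finite F" "b \<in> boundaries K p" "z = symdiff (chain_sum F) b"
    unfolding in_hspan_def by blast
  have "cv z = (\<Sum>c\<in>F. cv c) + cv b" using Fb by (simp add: cv_symdiff cv_chain_sum)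
  moreover have "(\<Sum>c\<in>F. cv c) \<in> Z.span (cv ` S \<union> cv ` boundaries K p)"
    using Fb by (intro Z.span_sum Z.span_base) auto
  moreover have "cv b \<in> Z.span (cv ` S \<union> cv ` boundaries K p)" using Fb by (intro Z.span_base) auto
  ultimately show "cv z \<in> Z.span (cv ` S \<union> cv ` boundaries K p)" by (metis Z.span_add)
next
  assume "cv z \<in> Z.span (cv ` S \<union> cv ` boundaries K p)"
  then obtain x y where xy: "cv z = x + y" "x \<in> Z.span (cv ` S)" "y \<in> Z.span (cv ` boundaries K p)"
    unfolding Z.span_Un by blast
  obtain b where b: "b \<in> boundaries K p" "y = cv b" using xy(3) span_BV[OF sc] by auto
  have fcS: "finite (cv ` S)" using fS by simp
  obtain g where g: "x = (\<Sum>u\<in>cv ` S. zsc (g u) u)" using xy(2) Z.span_finite[OF fcS] by auto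
  have "x = (\<Sum>c\<in>S. zsc (g (cv c)) (cv c))"
    unfolding g by (rule sum.reindex[unfolded comp_def]) (meson inj_cv inj_on_subset subset_UNIV)
  also have "\<dots> = (\<Sum>c\<in>{c\<in>S. g (cv c) = 1}. cv c)" by (rule sum_zsc_bit[OF fS])
  also have "\<dots> = cv (chain_sum {c\<in>S. g (cv c) = 1})" using fS by (simp add: cv_chain_sum)
  finally have "cv z = cv (symdiff (chain_sum {c\<in>S. g (cv c) = 1}) b)" using xy(1) b by (simp add: cv_symdiff)
  then have "z = symdiff (chain_sum {c\<in>S. g (cv c) = 1}) b" by (rule cv_inj)
  moreover have "{c\<in>S. g (cv c) = 1} \<subseteq> S" by blast
  moreover have "finite {c\<in>S. g (cv c) = 1}" using fS by simp
  ultimately show "in_hspan K p z S" unfolding in_hspan_def using b(1) by blast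
qed

lemma span_Un_B0:
  assumes "B0 \<subseteq> BV" "BV \<subseteq> Z.span B0"
  shows "Z.span (A \<union> BV) = Z.span (A \<union> B0)"
proof -
  have s1: "Z.span B0 \<subseteq> Z.span (A \<union> B0)" by (rule Z.span_mono) blast
  have "A \<union> BV \<subseteq> Z.span (A \<union> B0)" using assms(2) s1 Z.span_superset[of "A \<union> B0"] by blast
  moreover have "A \<union> B0 \<subseteq> Z.span (A \<union> BV)" using assms(1) Z.span_superset[of "A \<union> BV"] by blast
  ultimately show ?thesis using span_le[of "A \<union> BV" "A \<union> B0"] span_le[of "A \<union> B0" "A \<union> BV"] by blast
qed

lemma greedy_append: "\<exists>ys. greedy K p acc xs = acc @ ys"
proof (induct xs arbitrary: acc)
  case Nil then show ?case by simp
next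
  case (Cons z zs)
  obtain ys where "greedy K p (if in_hspan K p z (set acc) then acc else acc @ [z]) zs =
    (if in_hspan K p z (set acc) then acc else acc @ [z]) @ ys" using Cons by blast
  then show ?case by (cases "in_hspan K p z (set acc)") auto
qed

lemma greedy_set: "set (greedy K p acc xs) \<subseteq> set acc \<union> set xs"
proof (induct xs arbitrary: acc)
  case Nil then show ?case by simp
next
  case (Cons z zs)
  have "set (greedy K p (if in_hspan K p z (set acc) then acc else acc @ [z]) zs) \<subseteq>
     set (if in_hspan K p z (set acc) then acc else acc @ [z]) \<union> set zs" by (rule Cons)
  moreover have "set (if in_hspan K p z (set acc) then acc else acc @ [z]) \<subseteq> set acc \<union> {z}" by auto
  ultimately show ?case by auto
qed

lemma greedy_split: "greedy K p acc (xs @ ys) = greedy K p (greedy K p acc xs) ys"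
  by (induct xs arbitrary: acc) auto

context
  fixes K :: "'a set set" and p :: nat and B0 :: "('a set \<Rightarrow> bit) set"
  assumes sc: "simplicial_complex K" and B0: "B0 \<subseteq> cv ` boundaries K p" "cv ` boundaries K p \<subseteq> Z.span B0"
begin

lemma hspan_B0: "finite S \<Longrightarrow> in_hspan K p z S \<longleftrightarrow> cv z \<in> Z.span (cv ` S \<union> B0)"
  using in_hspan_iff[OF sc] span_Un_B0[OF B0] by blast

lemma greedy_span: "\<forall>x \<in> set acc \<union> set xs. cv x \<in> Z.span (cv ` set (greedy K p acc xs) \<union> B0)"
proof (induct xs arbitrary: acc)
  case Nil
  show ?case by (auto intro!: Z.span_base)
next
  case (Cons z zs)
  define acc' where "acc' = (if in_hspan K p z (set acc) then acc else acc @ [z])"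
  have g: "greedy K p acc (z # zs) = greedy K p acc' zs" unfolding acc'_def by simp
  have IH: "\<forall>x\<in>set acc' \<union> set zs. cv x \<in> Z.span (cv ` set (greedy K p acc' zs) \<union> B0)" by (rule Cons)
  have accs: "set acc \<subseteq> set acc'" unfolding acc'_def by auto
  have zin: "cv z \<in> Z.span (cv ` set (greedy K p acc' zs) \<union> B0)"
  proof (cases "in_hspan K p z (set acc)")
    case True
    then have "cv z \<in> Z.span (cv ` set acc \<union> B0)" using hspan_B0[OF finite_set] by blast
    moreover have "cv ` set acc \<subseteq> Z.span (cv ` set (greedy K p acc' zs) \<union> B0)"
      using IH accs by blast
    moreover have "B0 \<subseteq> Z.span (cv ` set (greedy K p acc' zs) \<union> B0)"
      using Z.span_superset[of "cv ` set (greedy K p acc' zs) \<union> B0"] by blast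
    ultimately show ?thesis using span_le[of "cv ` set acc \<union> B0"] by blast
  next
    case False then have "z \<in> set acc'" unfolding acc'_def by simp
    then show ?thesis using IH by blast
  qed
  show ?case unfolding g using IH accs zin by auto
qed

definition Ginv :: "'a set set list \<Rightarrow> bool" where
  "Ginv acc \<longleftrightarrow> Z.independent (cv ` set acc \<union> B0) \<and> card (cv ` set acc \<union> B0) = length acc + card B0"

lemma B0_finite: "finite B0" using B0(1) boundaries_finite[OF sc] finite_subset by blast

lemma Ginv_nil: "Z.independent B0 \<Longrightarrow> Ginv []" unfolding Ginv_def by simp

lemma greedy_Ginv: "Ginv acc \<Longrightarrow> Ginv (greedy K p acc xs)"
proof (induct xs arbitrary: acc)
  case Nil then show ?case by simp
next
  case (Cons z zs)
  show ?case
  proof (cases "in_hspan K p z (set acc)")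
    case True then show ?thesis using Cons by simp
  next
    case False
    then have nz: "cv z \<notin> Z.span (cv ` set acc \<union> B0)" using hspan_B0[OF finite_set] by blast
    then have nz2: "cv z \<notin> cv ` set acc \<union> B0" using Z.span_superset[of "cv ` set acc \<union> B0"] by blast
    have e: "cv ` set (acc @ [z]) \<union> B0 = insert (cv z) (cv ` set acc \<union> B0)" by auto
    have fin: "finite (cv ` set acc \<union> B0)" using B0_finite by simp
    have ind: "Z.independent (cv ` set acc \<union> B0)" and cd: "card (cv ` set acc \<union> B0) = length acc + card B0"
      using Cons.prems unfolding Ginv_def by auto
    have "Z.independent (insert (cv z) (cv ` set acc \<union> B0))" by (rule Z.independent_insertI[OF nz ind])
    moreover have "card (insert (cv z) (cv ` set acc \<union> B0)) = Suc (card (cv ` set acc \<union> B0))"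
      using fin nz2 by simp
    ultimately have "Ginv (acc @ [z])" unfolding Ginv_def e using cd by simp
    then show ?thesis using Cons.hyps False by simp
  qed
qed

end

lemma filt_of_valid: "simplicial_complex K \<Longrightarrow> valid_filtration K v L \<Longrightarrow> filt K L"
  unfolding filt_def valid_filtration_def by blast

lemma ford_of_valid: "valid_filtration K v L \<Longrightarrow> \<forall>i<length L. \<forall>j<length L. rv v (L!i) < rv v (L!j) \<longrightarrow> i < j"
  unfolding valid_filtration_def by blast

theorem mainTheorem4:
  fixes K :: "'a::euclidean_space set set" and P :: "'a set" and p :: nat
    and L :: "'a \<Rightarrow> 'a set list" and Om :: "('a \<times> nat) list"
    and zs' :: "'a set set list"
  assumes "simplicial_complex K"
    and "P = \<Union>K"
    and "p > 0"
    and "\<forall>v\<in>P. valid_filtration K v (L v)"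
    and "valid_Omega_order P (\<lambda>v. ess_cycles (L v) p) Om"
    and "length zs' = length (build_M K p (\<lambda>v. ess_cycles (L v) p) Om)"
    and "\<forall>z\<in>set zs'. z \<in> cycles K p"
    and "\<forall>z\<in>cycles K p. in_hspan K p z (set zs')"
    and "\<forall>i<length zs'. \<forall>j<length zs'.
           rP_class K p P (zs' ! i) < rP_class K p P (zs' ! j) \<longrightarrow> i < j"
  shows "\<forall>j<length zs'.
           rP P (build_M K p (\<lambda>v. ess_cycles (L v) p) Om ! j) \<le> rP_class K p P (zs' ! j)"
proof -
  note sc = assms(1)
  define Z where "Z = (\<lambda>v. ess_cycles (L v) p)"
  define f where "f = (\<lambda>(v, i). Z v ! i)"
  define OmL where "OmL = map f Om"
  define M where "M = greedy K p [] OmL"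
  have M_eq: "build_M K p (\<lambda>v. ess_cycles (L v) p) Om = M"
    unfolding M_def OmL_def f_def Z_def build_M_def by simp
  let ?Bd = "boundaries K p"
  have finK: "finite K" and finS: "\<forall>\<sigma>\<in>K. finite \<sigma> \<and> \<sigma> \<noteq> {}" using sc unfolding simplicial_complex_def by auto
  have finP: "finite P" using assms(2) finK finS by auto
  obtain B0 where B0: "B0 \<subseteq> cv ` ?Bd" "Z.independent B0" "cv ` ?Bd \<subseteq> Z.span B0"
    using Z.maximal_independent_subset[of "cv ` ?Bd"] by blast
  have B0fin: "finite B0" using B0(1) boundaries_finite[OF sc] finite_subset by blast
  have hsp: "\<And>S z. finite S \<Longrightarrow> in_hspan K p z S \<longleftrightarrow> cv z \<in> Z.span (cv ` S \<union> B0)"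
    using hspan_B0[OF sc B0(1) B0(3)] by blast
  have Omset: "set Om = {(v, i). v \<in> P \<and> i < length (Z v)}"
    using assms(5) unfolding valid_Omega_order_def Z_def by blast
  have Omord: "\<forall>a<length Om. \<forall>b<length Om.
        (rv_chain (fst (Om ! a)) (Z (fst (Om ! a)) ! snd (Om ! a))
           < rv_chain (fst (Om ! b)) (Z (fst (Om ! b)) ! snd (Om ! b))
         \<or> (fst (Om ! a) = fst (Om ! b) \<and> snd (Om ! a) < snd (Om ! b))) \<longrightarrow> a < b"
    using assms(5) unfolding valid_Omega_order_def Z_def by blast
  have essc: "\<And>v \<zeta>. v \<in> P \<Longrightarrow> \<zeta> \<in> set (Z v) \<Longrightarrow> \<zeta> \<in> cycles K p"
    unfolding Z_def using filt.ess_cycles_cycles filt_of_valid[OF sc] assms(4) by blast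
  have OmLc: "\<forall>x\<in>set OmL. x \<in> cycles K p"
  proof
    fix x assume "x \<in> set OmL"
    then obtain v i where "(v, i) \<in> set Om" "x = Z v ! i" unfolding OmL_def f_def by auto
    then show "x \<in> cycles K p" using Omset essc by auto
  qed
  have GinvM: "Ginv B0 M"
    unfolding M_def by (rule greedy_Ginv[OF sc B0(1) B0(3) Ginv_nil[OF sc B0(1) B0(3) B0(2)]])
  have Mc: "\<forall>x\<in>set M. x \<in> cycles K p" using greedy_set[of K p "[]" OmL] OmLc unfolding M_def by auto
  define m where "m = length M"
  have zlen: "length zs' = m" using assms(6) M_eq m_def by simp
  show ?thesis unfolding M_eq
  proof (intro allI impI)
    fix j assume jm: "j < length zs'"
    define R where "R = rP_class K p P (zs' ! j)"
    define pr where "pr = (\<lambda>(v, i). rv_chain v (Z v ! i) \<le> R)"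
    define q where "q = length (takeWhile pr Om)"
    have pref: "\<And>a. a < length Om \<Longrightarrow> pr (Om!a) \<Longrightarrow> a < q"
    proof (rule ccontr)
      fix a assume a: "a < length Om" "pr (Om!a)" "\<not> a < q"
      then have ql: "q < length Om" by simp
      then have "\<not> pr (Om!q)" unfolding q_def by (rule nth_length_takeWhile)
      then have "rv_chain (fst (Om ! a)) (Z (fst (Om ! a)) ! snd (Om ! a))
           < rv_chain (fst (Om ! q)) (Z (fst (Om ! q)) ! snd (Om ! q))"
        using a(2) unfolding pr_def by (auto split: prod.splits)
      then have "a < q" using Omord a(1) ql by blast
      then show False using a(3) by simp
    qed
    define M1 where "M1 = greedy K p [] (take q OmL)"
    have MM1: "M = greedy K p M1 (drop q OmL)" unfolding M_def M1_def
      by (metis append_take_drop_id greedy_split)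
    obtain ys where ys: "M = M1 @ ys" using greedy_append MM1 by blast
    have sp1: "\<forall>x\<in>set (take q OmL). cv x \<in> Z.span (cv ` set M1 \<union> B0)"
      using greedy_span[OF sc B0(1) B0(3), of "[]" "take q OmL"] unfolding M1_def by simp
    have M1set: "set M1 \<subseteq> set (take q OmL)" using greedy_set[of K p "[]" "take q OmL"] unfolding M1_def by simp
    have B0sp: "B0 \<subseteq> Z.span (cv ` set M1 \<union> B0)" using Z.span_superset[of "cv ` set M1 \<union> B0"] by blast
    have Bdsp: "cv ` ?Bd \<subseteq> Z.span (cv ` set M1 \<union> B0)" using B0(3) B0sp span_le by blast
    have key: "\<And>i. i \<le> j \<Longrightarrow> cv (zs'!i) \<in> Z.span (cv ` set M1 \<union> B0)"
    proof -
      fix i assume ij: "i \<le> j"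
      have im: "i < length zs'" using ij jm by simp
      have iR: "rP_class K p P (zs' ! i) \<le> R"
        using assms(9) im jm ij unfolding R_def by (meson leD not_le_imp_less)
      let ?z = "zs'!i"
      have zc: "?z \<in> cycles K p" using assms(7) im by simp
      show "cv ?z \<in> Z.span (cv ` set M1 \<union> B0)"
      proof (cases "cv ?z \<in> Z.span B0")
        case True then show ?thesis using Z.span_mono[of B0 "cv ` set M1 \<union> B0"] by blast
      next
        case False
        have zsub: "?z \<subseteq> simplices K p" and zbd: "bd ?z = {}" using zc by (auto simp: cycles_def)
        have zfin: "finite ?z" using zsub chain_finite[OF sc] by blast
        have zne: "?z \<noteq> {}" using False Z.span_zero by (metis cv_empty)
        have zcl: "?z \<in> hclass K p ?z" unfolding hclass_def using empty_boundary
          by (metis (mono_tags, lifting) Un_empty_right Diff_empty symdiff_def mem_Collect_eq empty_Diff)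
        obtain \<sigma> where "\<sigma> \<in> ?z" using zne by blast
        then have "\<sigma> \<in> K" using zsub by (auto simp: simplices_def)
        then obtain x where "x \<in> P" using finS assms(2) by blast
        define Si where "Si = {rv_chain v \<eta> | v \<eta>. v \<in> P \<and> \<eta> \<in> hclass K p ?z \<and> \<eta> \<noteq> {}}"
        have "Si \<noteq> {}" unfolding Si_def using \<open>x \<in> P\<close> zcl zne by blast
        moreover have "finite Si"
        proof -
          have "hclass K p ?z = (\<lambda>b. symdiff ?z b) ` ?Bd" unfolding hclass_def by auto
          then have "finite (hclass K p ?z)" using boundaries_finite[OF sc] by simp
          then have "finite ((\<lambda>(v, \<eta>). rv_chain v \<eta>) ` (P \<times> hclass K p ?z))" using finP by simp
          moreover have "Si \<subseteq> (\<lambda>(v, \<eta>). rv_chain v \<eta>) ` (P \<times> hclass K p ?z)" unfolding Si_def by force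
          ultimately show ?thesis using finite_subset by blast
        qed
        ultimately have "Min Si \<in> Si" by (rule Min_in[rotated])
        then obtain v \<eta> where ve0: "v \<in> P" "\<eta> \<in> hclass K p ?z" "\<eta> \<noteq> {}" "Min Si = rv_chain v \<eta>"
          unfolding Si_def by blast
        have rPeq: "rP_class K p P ?z = Min Si" unfolding rP_class_def Si_def ..
        have ve: "v \<in> P" "\<eta> \<in> hclass K p ?z" "\<eta> \<noteq> {}" "rv_chain v \<eta> = rP_class K p P ?z"
          using ve0 rPeq by auto
        obtain b where b: "b \<in> ?Bd" "\<eta> = symdiff ?z b" using ve(2) unfolding hclass_def by blast
        have bp: "b \<subseteq> simplices K p" "finite b" "bd b = {}" using boundary_props[OF sc b(1)] by auto
        have "bd \<eta> = symdiff (bd ?z) (bd b)" using b(2) zfin bp(2) by (simp add: bd_symdiff)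
        then have "bd \<eta> = {}" using zbd bp(3) by (simp add: symdiff_def)
        moreover have "\<eta> \<subseteq> simplices K p" using b(2) zsub bp(1) unfolding symdiff_def by blast
        ultimately have ec: "\<eta> \<in> cycles K p" unfolding cycles_def by blast
        have vf: "valid_filtration K v (L v)" using assms(4) ve(1) by blast
        have "cv \<eta> \<in> Z.span (cv ` {\<zeta> \<in> set (ess_cycles (L v) p). Max (rv v ` \<zeta>) \<le> Max (rv v ` \<eta>)} \<union> cv ` ?Bd)"
          by (rule filt.KLc[OF filt_of_valid[OF sc vf] ford_of_valid[OF vf] ec ve(3)])
        moreover have "cv ` {\<zeta> \<in> set (ess_cycles (L v) p). Max (rv v ` \<zeta>) \<le> Max (rv v ` \<eta>)} \<union> cv ` ?Bd
            \<subseteq> Z.span (cv ` set M1 \<union> B0)"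
        proof -
          have "cv ` {\<zeta> \<in> set (ess_cycles (L v) p). Max (rv v ` \<zeta>) \<le> Max (rv v ` \<eta>)} \<subseteq> Z.span (cv ` set M1 \<union> B0)"
          proof
            fix y assume "y \<in> cv ` {\<zeta> \<in> set (ess_cycles (L v) p). Max (rv v ` \<zeta>) \<le> Max (rv v ` \<eta>)}"
            then obtain \<zeta> where zz: "y = cv \<zeta>" "\<zeta> \<in> set (Z v)" "rv_chain v \<zeta> \<le> rv_chain v \<eta>"
              unfolding Z_def rv_chain_def by auto
            then obtain i' where i': "i' < length (Z v)" "\<zeta> = Z v ! i'" by (auto simp: in_set_conv_nth)
            then have "(v, i') \<in> set Om" using Omset ve(1) by simp
            then obtain a where a: "a < length Om" "Om!a = (v, i')" by (auto simp: in_set_conv_nth)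
            have "pr (Om!a)" using a zz i' ve(4) iR unfolding pr_def by simp
            then have aq: "a < q" using pref a(1) by blast
            have zq: "\<zeta> = take q OmL ! a" using a aq i' unfolding OmL_def f_def by simp
            have "a < length (take q OmL)" using a aq unfolding OmL_def by simp
            then have "take q OmL ! a \<in> set (take q OmL)" by (rule nth_mem)
            then have "\<zeta> \<in> set (take q OmL)" using zq by simp
            then show "y \<in> Z.span (cv ` set M1 \<union> B0)" using sp1 zz by blast
          qed
          then show ?thesis using Bdsp by blast
        qed
        ultimately have etasp: "cv \<eta> \<in> Z.span (cv ` set M1 \<union> B0)" using span_le by blast
        have "cv ?z = cv \<eta> + cv b" using b(2) by (simp add: cv_symdiff addbb)
        moreover have "cv b \<in> Z.span (cv ` set M1 \<union> B0)" using Bdsp b(1) by blast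
        ultimately show ?thesis using etasp Z.span_add by metis
      qed
    qed
    have jM1: "j < length M1"
    proof (rule ccontr)
      assume "\<not> j < length M1"
      then have M1j: "length M1 \<le> j" by simp
      define S' where "S' = cv ` set M1 \<union> cv ` set (drop (Suc j) zs') \<union> B0"
      have finS': "finite S'" unfolding S'_def using B0fin by simp
      have "card S' \<le> card (cv ` set M1) + card (cv ` set (drop (Suc j) zs')) + card B0"
        unfolding S'_def using card_Un_le[of "cv ` set M1 \<union> cv ` set (drop (Suc j) zs')" B0]
          card_Un_le[of "cv ` set M1" "cv ` set (drop (Suc j) zs')"] by linarith
      also have "\<dots> \<le> length M1 + (m - Suc j) + card B0"
      proof -
        have c1: "card (cv ` set M1) \<le> length M1"
          using order_trans[OF card_image_le[OF finite_set] card_length] .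
        have c2: "card (cv ` set (drop (Suc j) zs')) \<le> length (drop (Suc j) zs')"
          using order_trans[OF card_image_le[OF finite_set] card_length] .
        have "length (drop (Suc j) zs') = m - Suc j" using zlen by simp
        then show ?thesis using c1 c2 by linarith
      qed
      also have "\<dots> < m + card B0" using M1j jm zlen by simp
      finally have cS: "card S' < m + card B0" .
      have zsp: "cv ` set zs' \<subseteq> Z.span S'"
      proof
        fix y assume "y \<in> cv ` set zs'"
        then obtain i where i: "i < length zs'" "y = cv (zs'!i)" by (auto simp: in_set_conv_nth)
        show "y \<in> Z.span S'"
        proof (cases "i \<le> j")
          case True
          have "Z.span (cv ` set M1 \<union> B0) \<subseteq> Z.span S'" unfolding S'_def by (rule Z.span_mono) blast
          then show ?thesis using key[OF True] i by blast
        next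
          case False
          then have "zs'!i = drop (Suc j) zs' ! (i - Suc j)" using i by simp
          moreover have "i - Suc j < length (drop (Suc j) zs')" using i False by simp
          ultimately have "zs'!i \<in> set (drop (Suc j) zs')" by (metis nth_mem)
          then show ?thesis using i unfolding S'_def by (intro Z.span_base) blast
        qed
      qed
      have "cv ` set M \<union> B0 \<subseteq> Z.span S'"
      proof
        fix y assume "y \<in> cv ` set M \<union> B0"
        then show "y \<in> Z.span S'"
        proof
          assume "y \<in> cv ` set M"
          then obtain x where x: "x \<in> set M" "y = cv x" by blast
          have "in_hspan K p x (set zs')" using assms(8) Mc x(1) by blast
          then have "cv x \<in> Z.span (cv ` set zs' \<union> B0)" using hsp[OF finite_set] by blast
          moreover have "cv ` set zs' \<union> B0 \<subseteq> Z.span S'"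
            using zsp Z.span_superset[of S'] unfolding S'_def by blast
          ultimately show "y \<in> Z.span S'" using x(2) span_le by blast
        next
          assume "y \<in> B0" then show "y \<in> Z.span S'" unfolding S'_def by (intro Z.span_base) blast
        qed
      qed
      moreover have ind: "Z.independent (cv ` set M \<union> B0)" using GinvM unfolding Ginv_def[OF sc B0(1) B0(3)] by blast
      ultimately have "card (cv ` set M \<union> B0) \<le> card S'"
        using Z.independent_span_bound[OF finS' ind] by blast
      moreover have "card (cv ` set M \<union> B0) = m + card B0" using GinvM unfolding Ginv_def[OF sc B0(1) B0(3)] m_def by simp
      ultimately show False using cS by simp
    qed
    have "M ! j = M1 ! j" using ys jM1 by (simp add: nth_append)
    then have "M ! j \<in> set (take q OmL)" using nth_mem[OF jM1] M1set by auto
    moreover have "take q OmL = map f (takeWhile pr Om)"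
      unfolding OmL_def q_def by (simp add: take_map takeWhile_eq_take[symmetric])
    ultimately obtain v i where vi: "(v, i) \<in> set (takeWhile pr Om)" "M ! j = Z v ! i"
      unfolding f_def by auto
    then have vP: "v \<in> P" and vR: "rv_chain v (M ! j) \<le> R"
      using set_takeWhileD[OF vi(1)] Omset unfolding pr_def by auto
    have "rP P (M ! j) \<le> rv_chain v (M ! j)"
      unfolding rP_def using finP vP by (intro Min_le) auto
    then show "rP P (M ! j) \<le> rP_class K p P (zs' ! j)" using vR unfolding R_def by simp
  qed
qed

end
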